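(* Let $\mathcal E$ be the supermanifold with coordinates $(x,y,u,u_x,u_y,\lambda\,|\,\nu,\tau,u_\nu,u_\tau,\theta,\phi)$ (first six even, last six odd), and let $\mathcal H$ be the rank $(3|4)$ distribution $\mathcal H=\langle D_x,D_y,\partial_\lambda\,|\,D_\nu,D_\tau,\partial_\theta,\partial_\phi\rangle$, where $D_x=\partial_x+u_x\partial_u+(\tfrac{\lambda^3}{3}+2\theta\phi\lambda)\partial_{u_x}+(\tfrac{\lambda^2}{2}+\theta\phi)\partial_{u_y}+\lambda\phi\partial_{u_\nu}-\lambda\theta\partial_{u_\tau}$, $D_y=\partial_y+u_y\partial_u+(\tfrac{\lambda^2}{2}+\theta\phi)\partial_{u_x}+\lambda\partial_{u_y}+\phi\partial_{u_\nu}-\theta\partial_{u_\tau}$, $D_\nu=\partial_\nu+u_\nu\partial_u+\lambda\phi\partial_{u_x}+\phi\partial_{u_y}-\lambda\partial_{u_\tau}$, $D_\tau=\partial_\tau+u_\tau\partial_u-\lambda\theta\partial_{u_x}-\theta\partial_{u_y}+\lambda\partial_{u_\nu}$. Then the Cauchy characteristic space $Ch(\mathcal H)=\{\mathbf X\in\Gamma(\mathcal H):\mathcal L_{\mathbf X}\mathcal H\subset\mathcal H\}$ is spanned (over superfunctions) by $\mathbf C=D_x-\lambda D_y-\theta D_\nu-\phi D_\tau$.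
   Context: $(\mathcal E,\mathcal H)$ is the $G(3)$-contact super-PDE system $u_{xx}=\tfrac13u_{yy}^3+2u_{yy}u_{y\nu}u_{y\tau}$, $u_{xy}=\tfrac12u_{yy}^2+u_{y\nu}u_{y\tau}$, $u_{x\nu}=u_{yy}u_{y\nu}$, $u_{x\tau}=u_{yy}u_{y\tau}$, $u_{\nu\tau}=-u_{yy}$ parametrized by $\lambda=u_{yy}$, $\theta=-u_{y\tau}$, $\phi=u_{y\nu}$, with the restriction of the contact system of $J^2(\mathbb C^{2|2},\mathbb C^{1|0})$. *)

theory Defs
  imports "HOL-Analysis.Analysis"
begin

text \<open>Even coordinates (indices 0..5): x, y, u, u_x, u_y, lambda.
  Odd coordinates  (indices 0..5): nu, tau, u_nu, u_tau, theta, phi.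
  A superfunction is F = sum over S subset of {0..5} of F_S(even coords) xi_S,
  where xi_S is the product of the odd coordinates in S in increasing order.
  A point of the even part is a map nat => complex (only entries 0..5 matter).\<close>

type_synonym pt = "nat \<Rightarrow> complex"
type_synonym sfun = "nat set \<Rightarrow> pt \<Rightarrow> complex"
type_synonym vf = "nat \<Rightarrow> sfun"

definition pd :: "nat \<Rightarrow> (pt \<Rightarrow> complex) \<Rightarrow> pt \<Rightarrow> complex" where
  "pd i f x = deriv (\<lambda>z. f (x(i := z))) (x i)"

fun iterpd :: "nat list \<Rightarrow> (pt \<Rightarrow> complex) \<Rightarrow> pt \<Rightarrow> complex" where
  "iterpd [] f = f"
| "iterpd (i # is) f = pd i (iterpd is f)"

text \<open>Holomorphic (entire) functions of the 6 even coordinates: all iterated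
  partial derivatives exist as complex derivatives in each variable
  (equivalent to holomorphy by Hartogs' theorem).\<close>
definition hol :: "(pt \<Rightarrow> complex) \<Rightarrow> bool" where
  "hol f \<longleftrightarrow> (\<forall>x. f x = f (\<lambda>i. if i < 6 then x i else 0)) \<and>
     (\<forall>is. \<forall>i<6. \<forall>x. (\<lambda>z. iterpd is f (x(i := z))) field_differentiable at (x i))"

definition SF :: "sfun set" where
  "SF = {F. (\<forall>S. \<not> S \<subseteq> {..<6} \<longrightarrow> F S = (\<lambda>_. 0)) \<and> (\<forall>S. hol (F S))}"

text \<open>Sign of xi_A xi_B = sgn2 A B xi_(A union B) for disjoint A, B.\<close>
definition sgn2 :: "nat set \<Rightarrow> nat set \<Rightarrow> complex" where
  "sgn2 A B = (-1) ^ card {(a, b). a \<in> A \<and> b \<in> B \<and> b < a}"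

definition smult :: "sfun \<Rightarrow> sfun \<Rightarrow> sfun" where
  "smult F G = (\<lambda>S x. \<Sum>A\<in>Pow S. sgn2 A (S - A) * F A x * G (S - A) x)"

definition sadd :: "sfun \<Rightarrow> sfun \<Rightarrow> sfun" where
  "sadd F G = (\<lambda>S x. F S x + G S x)"

definition sscale :: "complex \<Rightarrow> sfun \<Rightarrow> sfun" where
  "sscale c F = (\<lambda>S x. c * F S x)"

definition sconst :: "complex \<Rightarrow> sfun" where
  "sconst c = (\<lambda>S x. if S = {} then c else 0)"

definition ecoord :: "nat \<Rightarrow> sfun" where
  "ecoord i = (\<lambda>S x. if S = {} then x i else 0)"

definition ocoord :: "nat \<Rightarrow> sfun" where
  "ocoord j = (\<lambda>S x. if S = {j} then 1 else 0)"

text \<open>Coordinate derivations: index k < 6 is d/d(even coord k),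
  index 6 + j (j < 6) is the left derivative d/d(odd coord j).\<close>
definition even_d :: "nat \<Rightarrow> sfun \<Rightarrow> sfun" where
  "even_d i F = (\<lambda>S. pd i (F S))"

definition odd_d :: "nat \<Rightarrow> sfun \<Rightarrow> sfun" where
  "odd_d j F = (\<lambda>S x. if j \<notin> S \<and> j < 6
       then (-1) ^ card {s \<in> S. s < j} * F (insert j S) x else 0)"

definition dcoord :: "nat \<Rightarrow> sfun \<Rightarrow> sfun" where
  "dcoord k F = (if k < 6 then even_d k F else odd_d (k - 6) F)"

text \<open>A vector field X = sum_{k<12} X k * d_k (coefficients on the left).\<close>
definition vapply :: "vf \<Rightarrow> sfun \<Rightarrow> sfun" where
  "vapply X g = (\<lambda>S x. \<Sum>k<12. smult (X k) (dcoord k g) S x)"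

definition sproj :: "nat \<Rightarrow> sfun \<Rightarrow> sfun" where
  "sproj p F = (\<lambda>S. if even (card S) = (p = 0) then F S else (\<lambda>_. 0))"

definition vpart :: "nat \<Rightarrow> vf \<Rightarrow> vf" where
  "vpart p X = (\<lambda>k. sproj ((p + (if k < 6 then 0 else 1)) mod 2) (X k))"

text \<open>Supercommutator of homogeneous fields of parities p, q:
  [A,B]_k = A(B_k) - (-1)^(pq) B(A_k); extended bilinearly.\<close>
definition hbr :: "nat \<Rightarrow> nat \<Rightarrow> vf \<Rightarrow> vf \<Rightarrow> vf" where
  "hbr p q A B = (\<lambda>k S x. vapply A (B k) S x - (-1) ^ (p * q) * vapply B (A k) S x)"

definition sbr :: "vf \<Rightarrow> vf \<Rightarrow> vf" where
  "sbr X Y = (\<lambda>k S x. \<Sum>p<2. \<Sum>q<2. hbr p q (vpart p X) (vpart q Y) k S x)"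

definition vfl :: "(sfun \<times> nat) list \<Rightarrow> vf" where
  "vfl l = (\<lambda>k S x. sum_list (map (\<lambda>(c, j). if j = k then c S x else 0) l))"

definition vscale :: "sfun \<Rightarrow> vf \<Rightarrow> vf" where
  "vscale f V = (\<lambda>k. smult f (V k))"

abbreviation "c_ux \<equiv> ecoord 3"
abbreviation "c_uy \<equiv> ecoord 4"
abbreviation "c_lam \<equiv> ecoord 5"
abbreviation "c_unu \<equiv> ocoord 2"
abbreviation "c_utau \<equiv> ocoord 3"
abbreviation "c_th \<equiv> ocoord 4"
abbreviation "c_ph \<equiv> ocoord 5"

definition Dx :: vf where
  "Dx = vfl [(sconst 1, 0), (c_ux, 2),
     (sadd (sscale (1/3) (smult c_lam (smult c_lam c_lam)))
           (sscale 2 (smult (smult c_th c_ph) c_lam)), 3),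
     (sadd (sscale (1/2) (smult c_lam c_lam)) (smult c_th c_ph), 4),
     (smult c_lam c_ph, 8),
     (sscale (-1) (smult c_lam c_th), 9)]"

definition Dy :: vf where
  "Dy = vfl [(sconst 1, 1), (c_uy, 2),
     (sadd (sscale (1/2) (smult c_lam c_lam)) (smult c_th c_ph), 3),
     (c_lam, 4), (c_ph, 8), (sscale (-1) c_th, 9)]"

definition Dnu :: vf where
  "Dnu = vfl [(sconst 1, 6), (c_unu, 2), (smult c_lam c_ph, 3), (c_ph, 4),
     (sscale (-1) c_lam, 9)]"

definition Dtau :: vf where
  "Dtau = vfl [(sconst 1, 7), (c_utau, 2), (sscale (-1) (smult c_lam c_th), 3),
     (sscale (-1) c_th, 4), (c_lam, 8)]"

definition Hgens :: "vf list" where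
  "Hgens = [Dx, Dy, vfl [(sconst 1, 5)], Dnu, Dtau, vfl [(sconst 1, 10)], vfl [(sconst 1, 11)]]"

definition GammaH :: "vf set" where
  "GammaH = {X. \<exists>f. (\<forall>i<7. f i \<in> SF) \<and>
       X = (\<lambda>k S x. \<Sum>i<7. smult (f i) ((Hgens ! i) k) S x)}"

definition ChH :: "vf set" where
  "ChH = {X \<in> GammaH. \<forall>Y \<in> GammaH. sbr X Y \<in> GammaH}"

definition Cfield :: vf where
  "Cfield = (\<lambda>k S x. Dx k S x - smult c_lam (Dy k) S x - smult c_th (Dnu k) S x
                     - smult c_ph (Dtau k) S x)"

end

theory Submission
  imports Defs
begin


section \<open>sgn2 combinatorics\<close>

definition prs :: "nat set \<Rightarrow> nat set \<Rightarrow> (nat \<times> nat) set" where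
  "prs A B = {(a, b). a \<in> A \<and> b \<in> B \<and> b < a}"

lemma sgn2_prs: "sgn2 A B = (-1) ^ card (prs A B)"
  by (simp add: sgn2_def prs_def)

lemma prs_fin: "finite A \<Longrightarrow> finite B \<Longrightarrow> finite (prs A B)"
  by (rule finite_subset[of _ "A \<times> B"]) (auto simp: prs_def)

lemma sgn2_empty_l[simp]: "sgn2 {} B = 1" by (simp add: sgn2_def)
lemma sgn2_empty_r[simp]: "sgn2 A {} = 1" by (simp add: sgn2_def)

lemma sgn2_un_r:
  assumes "finite A" "finite B" "finite C" "B \<inter> C = {}"
  shows "sgn2 A (B \<union> C) = sgn2 A B * sgn2 A C"
proof -
  have e: "prs A (B \<union> C) = prs A B \<union> prs A C" by (auto simp: prs_def)
  have d: "prs A B \<inter> prs A C = {}" using assms(4) by (auto simp: prs_def)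
  show ?thesis unfolding sgn2_prs e
    using card_Un_disjoint[OF prs_fin prs_fin d] assms by (simp add: power_add)
qed

lemma sgn2_un_l:
  assumes "finite A" "finite B" "finite C" "A \<inter> B = {}"
  shows "sgn2 (A \<union> B) C = sgn2 A C * sgn2 B C"
proof -
  have e: "prs (A \<union> B) C = prs A C \<union> prs B C" by (auto simp: prs_def)
  have d: "prs A C \<inter> prs B C = {}" using assms(4) by (auto simp: prs_def)
  show ?thesis unfolding sgn2_prs e
    using card_Un_disjoint[OF prs_fin prs_fin d] assms by (simp add: power_add)
qed

lemma sgn2_sq: "sgn2 A B * sgn2 A B = 1"
  by (simp add: sgn2_def flip: power_add)

lemma sgn2_swap:
  assumes "finite A" "finite B" "A \<inter> B = {}"
  shows "sgn2 A B * sgn2 B A = (-1) ^ (card A * card B)"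
proof -
  let ?P = "prs A B" and ?Q = "{(a, b). a \<in> A \<and> b \<in> B \<and> a < b}"
  have "card (prs B A) = card ?Q"
    by (rule bij_betw_same_card[of "\<lambda>(x, y). (y, x)"]) (auto simp: bij_betw_def inj_on_def prs_def image_def)
  moreover have "?P \<union> ?Q = A \<times> B" using assms(3) by (auto simp: prs_def)
  moreover have "?P \<inter> ?Q = {}" by (auto simp: prs_def)
  moreover have "finite ?Q" by (rule finite_subset[of _ "A \<times> B"]) (use assms in auto)
  ultimately have "card (prs A B) + card (prs B A) = card A * card B"
    using card_Un_disjoint[OF prs_fin[OF assms(1,2)], of ?Q] by (simp add: card_cartesian_product)
  then show ?thesis unfolding sgn2_prs by (metis power_add)
qed

lemma sgn2_single_l: "finite B \<Longrightarrow> sgn2 {j} B = (-1) ^ card {b \<in> B. b < j}"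
proof -
  assume "finite B"
  have "card (prs {j} B) = card {b \<in> B. b < j}"
    by (rule bij_betw_same_card[of snd]) (auto simp: bij_betw_def inj_on_def prs_def image_def)
  then show ?thesis by (simp add: sgn2_prs)
qed

lemma sgn2_single_r: "finite A \<Longrightarrow> sgn2 A {j} = (-1) ^ card {a \<in> A. j < a}"
proof -
  assume "finite A"
  have "card (prs A {j}) = card {a \<in> A. j < a}"
    by (rule bij_betw_same_card[of fst]) (auto simp: bij_betw_def inj_on_def prs_def image_def)
  then show ?thesis by (simp add: sgn2_prs)
qed

lemma neg1_pow_mod: "((-1::complex) ^ n) = (-1) ^ (n mod 2)"
  by (metis minus_one_power_iff mod_mod_trivial even_mod_2_iff)

section \<open>Holomorphic functions\<close>

definition rst :: "pt \<Rightarrow> pt" where "rst x = (\<lambda>i. if i < 6 then x i else 0)"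

definition dif :: "(pt \<Rightarrow> complex) \<Rightarrow> bool" where
  "dif f \<longleftrightarrow> (\<forall>i x. (\<lambda>z. f (x(i := z))) field_differentiable at (x i))"

lemma hol_rst: "hol f \<Longrightarrow> f x = f (rst x)"
  by (simp add: hol_def rst_def)

lemma rst_upd_hi: "\<not> i < 6 \<Longrightarrow> rst (x(i := z)) = rst x"
  by (auto simp: rst_def)

lemma hol_upd_hi: "hol f \<Longrightarrow> \<not> i < 6 \<Longrightarrow> (\<lambda>z. f (x(i := z))) = (\<lambda>z. f x)"
  by (metis hol_rst rst_upd_hi)

lemma pd_hi: "hol f \<Longrightarrow> \<not> i < 6 \<Longrightarrow> pd i f = (\<lambda>_. 0)"
  by (rule ext) (simp add: pd_def hol_upd_hi)

lemma hol_dif: assumes "hol f" shows "dif f"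
  unfolding dif_def
proof (intro allI)
  fix i x
  show "(\<lambda>z. f (x(i := z))) field_differentiable at (x i)"
  proof (cases "i < 6")
    case True then show ?thesis using assms unfolding hol_def by (metis iterpd.simps(1))
  next
    case False then show ?thesis by (simp add: hol_upd_hi[OF assms])
  qed
qed

lemma dif_at: "dif f \<Longrightarrow> (\<lambda>z. f (x(i := z))) field_differentiable at w"
proof -
  assume "dif f"
  then have "(\<lambda>z. f ((x(i := w))(i := z))) field_differentiable at ((x(i := w)) i)"
    unfolding dif_def by blast
  then show ?thesis by simp
qed

lemma dif_const[simp]: "dif (\<lambda>x. c)" by (simp add: dif_def)
lemma dif_coord[simp]: "dif (\<lambda>x. x j)"
  unfolding dif_def
proof (intro allI)
  fix i x
  show "(\<lambda>z. (x(i := z)) j) field_differentiable at (x i)"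
  proof (cases "i = j")
    case True then show ?thesis by simp
  next
    case False then show ?thesis by simp
  qed
qed
lemma dif_add: "dif f \<Longrightarrow> dif g \<Longrightarrow> dif (\<lambda>x. f x + g x)"
  unfolding dif_def by (auto intro!: field_differentiable_add)
lemma dif_mult: "dif f \<Longrightarrow> dif g \<Longrightarrow> dif (\<lambda>x. f x * g x)"
  unfolding dif_def by (auto intro!: field_differentiable_mult)
lemma dif_sum_list: "(\<And>y. y \<in> set L \<Longrightarrow> dif (h y)) \<Longrightarrow> dif (\<lambda>x. \<Sum>y\<leftarrow>L. h y x)"
  by (induction L) (auto intro: dif_add)

lemma pd_add: "dif f \<Longrightarrow> dif g \<Longrightarrow> pd i (\<lambda>x. f x + g x) = (\<lambda>x. pd i f x + pd i g x)"
  by (rule ext) (simp add: pd_def dif_at)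
lemma pd_mult: "dif f \<Longrightarrow> dif g \<Longrightarrow> pd i (\<lambda>x. f x * g x) = (\<lambda>x. pd i f x * g x + f x * pd i g x)"
  by (rule ext) (simp add: pd_def dif_at algebra_simps)
lemma pd_const[simp]: "pd i (\<lambda>x. c) = (\<lambda>x. 0)"
  by (rule ext) (simp add: pd_def)
lemma pd_coord: "pd i (\<lambda>x. x j) = (\<lambda>x. if i = j then 1 else 0)"
  by (rule ext) (auto simp: pd_def fun_upd_def)
lemma pd_sum_list: "(\<And>y. y \<in> set L \<Longrightarrow> dif (h y)) \<Longrightarrow>
    pd i (\<lambda>x. \<Sum>y\<leftarrow>L. h y x) = (\<lambda>x. \<Sum>y\<leftarrow>L. pd i (h y) x)"
proof (induction L)
  case Nil then show ?case by simp
next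
  case (Cons a L)
  have "pd i (\<lambda>x. \<Sum>y\<leftarrow>a # L. h y x) = pd i (\<lambda>x. h a x + (\<Sum>y\<leftarrow>L. h y x))" by simp
  also have "\<dots> = (\<lambda>x. pd i (h a) x + pd i (\<lambda>x. \<Sum>y\<leftarrow>L. h y x) x)"
    using Cons by (intro pd_add dif_sum_list) auto
  finally show ?case using Cons by simp
qed

lemma iterpd_append: "iterpd (is @ [i]) f = iterpd is (pd i f)"
  by (induction "is") auto

lemma hol_const[simp]: "hol (\<lambda>x. c)"
proof -
  have "iterpd is (\<lambda>x. c) = (\<lambda>x. if is = [] then c else 0)" for "is"
    by (induction "is") auto
  then show ?thesis by (simp add: hol_def)
qed

lemma hol_pd: assumes "hol f" shows "hol (pd i f)"
proof (cases "i < 6")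
  case True
  have inv: "pd i f x = pd i f (rst x)" for x
  proof -
    have "(\<lambda>z. f (x(i := z))) = (\<lambda>z. f ((rst x)(i := z)))"
      by (rule ext, subst hol_rst[OF assms], subst (2) hol_rst[OF assms])
         (rule arg_cong[where f=f], auto simp: rst_def True)
    moreover have "rst x i = x i" using True by (simp add: rst_def)
    ultimately show ?thesis by (simp add: pd_def)
  qed
  show ?thesis unfolding hol_def
  proof (intro conjI allI impI)
    fix x show "pd i f x = pd i f (\<lambda>i. if i < 6 then x i else 0)" using inv by (simp add: rst_def)
  next
    fix "is" j x assume "j < (6::nat)"
    then show "(\<lambda>z. iterpd is (pd i f) (x(j := z))) field_differentiable at (x j)"
      using assms unfolding hol_def by (metis iterpd_append)
  qed
next
  case False
  then show ?thesis using pd_hi[OF assms False] hol_const by metis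
qed

lemma iterpd_add: "hol f \<Longrightarrow> hol g \<Longrightarrow> iterpd is (\<lambda>x. f x + g x) = (\<lambda>x. iterpd is f x + iterpd is g x)"
proof (induction "is")
  case Nil then show ?case by simp
next
  case (Cons i "is")
  have h: "hol (iterpd is f)" "hol (iterpd is g)" for "is"
    by (induction "is") (use Cons.prems in \<open>auto intro: hol_pd\<close>)
  show ?case using Cons by (simp add: pd_add hol_dif h)
qed

lemma hol_add: assumes "hol f" "hol g" shows "hol (\<lambda>x. f x + g x)"
proof -
  have h: "hol (iterpd is f)" "hol (iterpd is g)" for "is"
    by (induction "is") (use assms in \<open>auto intro: hol_pd\<close>)
  show ?thesis unfolding hol_def
  proof (intro conjI allI impI)
    fix x show "f x + g x = f (\<lambda>i. if i < 6 then x i else 0) + g (\<lambda>i. if i < 6 then x i else 0)"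
      using assms by (simp add: hol_def)
  next
    fix "is" i x
    show "(\<lambda>z. iterpd is (\<lambda>x. f x + g x) (x(i := z))) field_differentiable at (x i)"
      unfolding iterpd_add[OF assms] using h[of "is"] hol_dif dif_add unfolding dif_def by blast
  qed
qed

lemma dif_mult_hol: "hol a \<Longrightarrow> hol b \<Longrightarrow> dif (\<lambda>x. a x * b x)"
  by (intro dif_mult hol_dif)

definition psum :: "((pt \<Rightarrow> complex) \<times> (pt \<Rightarrow> complex)) list \<Rightarrow> pt \<Rightarrow> complex" where
  "psum L = (\<lambda>x. \<Sum>(a, b)\<leftarrow>L. a x * b x)"

lemma dif_psum: "\<forall>(a, b)\<in>set L. hol a \<and> hol b \<Longrightarrow> dif (psum L)"
proof (induction L)
  case Nil then show ?case by (simp add: psum_def)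
next
  case (Cons ab L)
  obtain a b where ab: "ab = (a, b)" by force
  have "psum (ab # L) = (\<lambda>x. a x * b x + psum L x)" by (simp add: psum_def ab)
  then show ?case using Cons ab by (auto intro!: dif_add dif_mult_hol)
qed

lemma psum_step:
  assumes "\<forall>(a, b)\<in>set L. hol a \<and> hol b"
  shows "pd i (psum L) = psum (concat (map (\<lambda>(a, b). [(pd i a, b), (a, pd i b)]) L))"
  using assms
proof (induction L)
  case Nil then show ?case by (simp add: psum_def)
next
  case (Cons ab L)
  obtain a b where ab: "ab = (a, b)" by force
  have ha: "hol a" "hol b" using Cons.prems ab by auto
  have dl: "dif (psum L)" using Cons.prems by (intro dif_psum) auto
  have "psum (ab # L) = (\<lambda>x. a x * b x + psum L x)" by (simp add: psum_def ab)
  then have "pd i (psum (ab # L)) = (\<lambda>x. pd i (\<lambda>x. a x * b x) x + pd i (psum L) x)"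
    using dl ha by (simp add: pd_add dif_mult hol_dif)
  also have "\<dots> = (\<lambda>x. pd i a x * b x + a x * pd i b x + pd i (psum L) x)"
    using ha by (simp add: pd_mult hol_dif)
  finally show ?case using Cons by (simp add: ab psum_def add.assoc)
qed

lemma hol_mult: assumes "hol f" "hol g" shows "hol (\<lambda>x. f x * g x)"
proof -
  have ex: "\<exists>L. (\<forall>(a, b)\<in>set L. hol a \<and> hol b) \<and> iterpd is (\<lambda>x. f x * g x) = psum L" for "is"
  proof (induction "is")
    case Nil
    show ?case by (rule exI[of _ "[(f, g)]"]) (simp add: assms psum_def)
  next
    case (Cons i "is")
    then obtain L where L: "\<forall>(a, b)\<in>set L. hol a \<and> hol b" "iterpd is (\<lambda>x. f x * g x) = psum L" by blast
    show ?case
      by (rule exI[of _ "concat (map (\<lambda>(a, b). [(pd i a, b), (a, pd i b)]) L)"])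
         (use L in \<open>auto simp: psum_step hol_pd\<close>)
  qed
  have d: "dif (iterpd is (\<lambda>x. f x * g x))" for "is"
  proof -
    obtain L where "\<forall>(a, b)\<in>set L. hol a \<and> hol b" "iterpd is (\<lambda>x. f x * g x) = psum L"
      using ex by blast
    then show ?thesis using dif_psum by simp
  qed
  show ?thesis unfolding hol_def
  proof (intro conjI allI impI)
    fix x show "f x * g x = f (\<lambda>i. if i < 6 then x i else 0) * g (\<lambda>i. if i < 6 then x i else 0)"
      using assms by (simp add: hol_def)
  next
    fix "is" i x
    show "(\<lambda>z. iterpd is (\<lambda>x. f x * g x) (x(i := z))) field_differentiable at (x i)"
      using d[of "is"] unfolding dif_def by blast
  qed
qed

lemma hol_coord: "j < 6 \<Longrightarrow> hol (\<lambda>x. x j)"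
proof -
  assume j: "j < 6"
  have "iterpd is (\<lambda>x. x j) = (if is = [] then (\<lambda>x. x j) else if is = [j] then (\<lambda>x. 1) else (\<lambda>x. 0))" for "is"
  proof (induction "is")
    case Nil then show ?case by simp
  next
    case (Cons a "is") then show ?case by (auto simp: pd_coord)
  qed
  moreover have "(\<lambda>z. (x(i := z)) j) field_differentiable at w" for x i w
    by (cases "i = j") auto
  ultimately show ?thesis using j by (auto simp: hol_def)
qed

lemma hol_sum: "finite A \<Longrightarrow> (\<And>a. a \<in> A \<Longrightarrow> hol (h a)) \<Longrightarrow> hol (\<lambda>x. \<Sum>a\<in>A. h a x)"
  by (induction A rule: finite_induct) (auto intro: hol_add)

lemma hol_sum': "(\<And>a. a \<in> A \<Longrightarrow> hol (h a)) \<Longrightarrow> hol (\<lambda>x. \<Sum>a\<in>A. h a x)"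
  by (cases "finite A") (auto intro: hol_sum)

lemma hol_zero[simp]: "hol (\<lambda>x. 0)" by (rule hol_const)

lemma hol_cmult: "hol f \<Longrightarrow> hol (\<lambda>x. c * f x)"
  using hol_mult[OF hol_const] by blast

lemma hol_minus: "hol f \<Longrightarrow> hol g \<Longrightarrow> hol (\<lambda>x. f x - g x)"
  using hol_add[of f "\<lambda>x. (-1) * g x"] hol_cmult[of g "-1"] by simp

lemma hol_pd_add: "hol f \<Longrightarrow> hol g \<Longrightarrow> pd i (\<lambda>x. f x + g x) = (\<lambda>x. pd i f x + pd i g x)"
  by (simp add: pd_add hol_dif)
lemma hol_pd_mult: "hol f \<Longrightarrow> hol g \<Longrightarrow> pd i (\<lambda>x. f x * g x) = (\<lambda>x. pd i f x * g x + f x * pd i g x)"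
  by (simp add: pd_mult hol_dif)
lemma hol_pd_sum: "finite A \<Longrightarrow> (\<And>a. a \<in> A \<Longrightarrow> hol (h a)) \<Longrightarrow>
   pd i (\<lambda>x. \<Sum>a\<in>A. h a x) = (\<lambda>x. \<Sum>a\<in>A. pd i (h a) x)"
proof (induction A rule: finite_induct)
  case empty then show ?case by simp
next
  case (insert a A)
  then show ?case by (simp add: hol_pd_add hol_sum)
qed



section \<open>Superalgebra\<close>

definition supp :: "sfun \<Rightarrow> bool" where
  "supp F \<longleftrightarrow> (\<forall>S. \<not> S \<subseteq> {..<6} \<longrightarrow> F S = (\<lambda>_. 0))"

definition hom :: "nat \<Rightarrow> sfun \<Rightarrow> bool" where
  "hom p F \<longleftrightarrow> (\<forall>S. odd (card S + p) \<longrightarrow> F S = (\<lambda>_. 0))"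

lemma SF_iff: "F \<in> SF \<longleftrightarrow> supp F \<and> (\<forall>S. hol (F S))"
  by (simp add: SF_def supp_def)

lemma SF_supp: "F \<in> SF \<Longrightarrow> supp F" by (simp add: SF_iff)
lemma SF_hol: "F \<in> SF \<Longrightarrow> hol (F S)" by (simp add: SF_iff)

lemma supp_inf: "supp F \<Longrightarrow> infinite S \<Longrightarrow> F S x = 0"
  unfolding supp_def by (metis finite_lessThan finite_subset)

lemma supp_z: "supp F \<Longrightarrow> \<not> S \<subseteq> {..<6} \<Longrightarrow> F S x = 0"
  unfolding supp_def by metis

lemma hom_z: "hom p F \<Longrightarrow> odd (card S + p) \<Longrightarrow> F S x = 0"
  unfolding hom_def by metis

lemma smult_inf: "infinite S \<Longrightarrow> smult F G S x = 0"
  by (simp add: smult_def)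

lemma sum_pow_pair:
  assumes "finite S"
  shows "(\<Sum>D\<in>Pow S. \<Sum>A\<in>Pow D. g A (D - A)) = (\<Sum>A\<in>Pow S. \<Sum>B\<in>Pow (S - A). g A B)"
proof -
  have "(\<Sum>D\<in>Pow S. \<Sum>A\<in>Pow D. g A (D - A)) = (\<Sum>(D, A)\<in>Sigma (Pow S) Pow. g A (D - A))"
    using assms by (subst sum.Sigma) (auto intro: finite_subset)
  also have "\<dots> = (\<Sum>(A, B)\<in>Sigma (Pow S) (\<lambda>A. Pow (S - A)). g A B)"
    by (rule sum.reindex_bij_witness[where i = "\<lambda>(A, B). (A \<union> B, A)" and j = "\<lambda>(D, A). (A, D - A)"])
       auto
  also have "\<dots> = (\<Sum>A\<in>Pow S. \<Sum>B\<in>Pow (S - A). g A B)"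
    using assms by (subst sum.Sigma) auto
  finally show ?thesis .
qed

lemma smult_assoc: "smult (smult F G) H = smult F (smult G H)"
proof (intro ext)
  fix S x
  show "smult (smult F G) H S x = smult F (smult G H) S x"
  proof (cases "finite S")
    case False then show ?thesis by (simp add: smult_inf)
  next
    case fin: True
    let ?g = "\<lambda>A B. sgn2 A B * sgn2 A (S - A - B) * sgn2 B (S - A - B) * F A x * G B x * H (S - A - B) x"
    have "smult (smult F G) H S x =
       (\<Sum>D\<in>Pow S. \<Sum>A\<in>Pow D. sgn2 D (S - D) * (sgn2 A (D - A) * F A x * G (D - A) x) * H (S - D) x)"
      by (simp add: smult_def sum_distrib_left sum_distrib_right)
    also have "\<dots> = (\<Sum>D\<in>Pow S. \<Sum>A\<in>Pow D. ?g A (D - A))"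
    proof (intro sum.cong refl)
      fix D A assume D: "D \<in> Pow S" and A: "A \<in> Pow D"
      have fD: "finite D" "finite A" "finite (D - A)" "finite (S - D)"
        using D A fin by (auto intro: finite_subset)
      have e: "S - A - (D - A) = S - D" using A D by auto
      have "sgn2 D (S - D) = sgn2 A (S - D) * sgn2 (D - A) (S - D)"
        using sgn2_un_l[of A "D - A" "S - D"] fD A by (simp add: Un_absorb1 Un_Diff_cancel)
      then show "sgn2 D (S - D) * (sgn2 A (D - A) * F A x * G (D - A) x) * H (S - D) x = ?g A (D - A)"
        unfolding e by (simp add: algebra_simps)
    qed
    also have "\<dots> = (\<Sum>A\<in>Pow S. \<Sum>B\<in>Pow (S - A). ?g A B)"
      by (rule sum_pow_pair[OF fin])
    also have "\<dots> = smult F (smult G H) S x"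
      unfolding smult_def
    proof (intro sum.cong refl)
      fix A assume A: "A \<in> Pow S"
      have "(\<Sum>B\<in>Pow (S - A). ?g A B) =
          (\<Sum>B\<in>Pow (S - A). sgn2 A (S - A) * F A x * (sgn2 B (S - A - B) * G B x * H (S - A - B) x))"
      proof (intro sum.cong refl)
        fix B assume B: "B \<in> Pow (S - A)"
        have fB: "finite A" "finite B" "finite (S - A - B)" using fin A B by (auto intro: finite_subset)
        have "S - A = B \<union> (S - A - B)" using B by auto
        then have "sgn2 A (S - A) = sgn2 A B * sgn2 A (S - A - B)"
          using sgn2_un_r[of A B "S - A - B"] fB by auto
        then show "?g A B = sgn2 A (S - A) * F A x * (sgn2 B (S - A - B) * G B x * H (S - A - B) x)"
          by (simp add: algebra_simps)
      qed
      then show "(\<Sum>B\<in>Pow (S - A). ?g A B) = sgn2 A (S - A) * F A x *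
          (\<Sum>Aa\<in>Pow (S - A). sgn2 Aa (S - A - Aa) * G Aa x * H (S - A - Aa) x)"
        by (simp add: sum_distrib_left)
    qed
    finally show ?thesis .
  qed
qed

lemma smult_add_l: "smult (\<lambda>S x. F S x + G S x) H = (\<lambda>S x. smult F H S x + smult G H S x)"
  by (simp add: smult_def algebra_simps sum.distrib)
lemma smult_add_r: "smult H (\<lambda>S x. F S x + G S x) = (\<lambda>S x. smult H F S x + smult H G S x)"
  by (simp add: smult_def algebra_simps sum.distrib)
lemma smult_diff_l: "smult (\<lambda>S x. F S x - G S x) H = (\<lambda>S x. smult F H S x - smult G H S x)"
  by (simp add: smult_def algebra_simps sum_subtractf)
lemma smult_diff_r: "smult H (\<lambda>S x. F S x - G S x) = (\<lambda>S x. smult H F S x - smult H G S x)"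
  by (simp add: smult_def algebra_simps sum_subtractf)
lemma smult_cmult_l: "smult (\<lambda>S x. c * F S x) H = (\<lambda>S x. c * smult F H S x)"
  by (simp add: smult_def algebra_simps sum_distrib_left)
lemma smult_cmult_r: "smult H (\<lambda>S x. c * F S x) = (\<lambda>S x. c * smult H F S x)"
  by (simp add: smult_def algebra_simps sum_distrib_left)
lemma smult_zero_l[simp]: "smult (\<lambda>S x. 0) H = (\<lambda>S x. 0)"
  by (simp add: smult_def)
lemma smult_zero_r[simp]: "smult H (\<lambda>S x. 0) = (\<lambda>S x. 0)"
  by (simp add: smult_def)
lemma smult_sum_l: "smult (\<lambda>S x. \<Sum>i\<in>I. F i S x) H = (\<lambda>S x. \<Sum>i\<in>I. smult (F i) H S x)"
  unfolding smult_def by (intro ext, simp add: sum_distrib_left sum_distrib_right algebra_simps, rule sum.swap)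
lemma smult_sum_r: "smult H (\<lambda>S x. \<Sum>i\<in>I. F i S x) = (\<lambda>S x. \<Sum>i\<in>I. smult H (F i) S x)"
  unfolding smult_def by (intro ext, simp add: sum_distrib_left sum_distrib_right algebra_simps, rule sum.swap)

lemma smult_const_l: assumes "supp F" shows "smult (sconst c) F = (\<lambda>S x. c * F S x)"
proof (intro ext)
  fix S x show "smult (sconst c) F S x = c * F S x"
  proof (cases "finite S")
    case False then show ?thesis using assms by (simp add: smult_inf supp_inf)
  next
    case True
    have "smult (sconst c) F S x = (\<Sum>A\<in>Pow S. if A = {} then c * F S x else 0)"
      unfolding smult_def by (auto simp: sconst_def intro!: sum.cong)
    then show ?thesis using True by simp
  qed
qed

lemma smult_const_r: assumes "supp F" shows "smult F (sconst c) = (\<lambda>S x. c * F S x)"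
proof (intro ext)
  fix S x show "smult F (sconst c) S x = c * F S x"
  proof (cases "finite S")
    case False then show ?thesis using assms by (simp add: smult_inf supp_inf)
  next
    case True
    have "smult F (sconst c) S x = (\<Sum>A\<in>Pow S. if A = S then c * F S x else 0)"
      unfolding smult_def by (auto simp: sconst_def intro!: sum.cong)
    then show ?thesis using True by simp
  qed
qed

lemma neg1_par: "even (a + p) \<Longrightarrow> even (b + q) \<Longrightarrow> ((-1::complex) ^ (a * b)) = (-1) ^ (p * q)"
  by (simp add: minus_one_power_iff)

lemma smult_comm:
  assumes "supp F" "supp G" "hom p F" "hom q G"
  shows "smult G F = (\<lambda>S x. (-1) ^ (p * q) * smult F G S x)"
proof (intro ext)
  fix S x show "smult G F S x = (-1) ^ (p * q) * smult F G S x"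
  proof (cases "finite S")
    case False then show ?thesis by (simp add: smult_inf)
  next
    case fin: True
    have "smult G F S x = (\<Sum>A\<in>Pow S. sgn2 (S - A) A * G (S - A) x * F A x)"
      unfolding smult_def
      by (rule sum.reindex_bij_witness[where i = "\<lambda>A. S - A" and j = "\<lambda>A. S - A"])
         (auto simp: double_diff)
    also have "\<dots> = (\<Sum>A\<in>Pow S. (-1) ^ (p * q) * (sgn2 A (S - A) * F A x * G (S - A) x))"
    proof (intro sum.cong refl)
      fix A assume A: "A \<in> Pow S"
      show "sgn2 (S - A) A * G (S - A) x * F A x = (-1) ^ (p * q) * (sgn2 A (S - A) * F A x * G (S - A) x)"
      proof (cases "odd (card A + p) \<or> odd (card (S - A) + q)")
        case True then show ?thesis using assms(3,4) by (auto simp: hom_z)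
      next
        case False
        have fA: "finite A" "finite (S - A)" using A fin by (auto intro: finite_subset)
        have sw: "sgn2 A (S - A) * sgn2 (S - A) A = (-1) ^ (card A * card (S - A))"
          using sgn2_swap[OF fA] by auto
        have "sgn2 (S - A) A = (-1) ^ (card A * card (S - A)) * sgn2 A (S - A)"
          using sw sgn2_sq[of A "S - A"] by (metis mult.assoc mult.commute mult_1_right)
        then show ?thesis using neg1_par[of "card A" p "card (S - A)" q] False by simp
      qed
    qed
    finally show ?thesis by (simp add: smult_def sum_distrib_left)
  qed
qed

lemma card_split: "finite S \<Longrightarrow> A \<subseteq> S \<Longrightarrow> card S = card A + card (S - A)"
  by (metis card_Diff_subset card_mono diff_add_inverse le_add_diff_inverse finite_subset)

lemma hom_smult: assumes "hom p F" "hom q G" shows "hom (p + q) (smult F G)"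
  unfolding hom_def
proof (intro allI impI ext)
  fix S :: "nat set" and x assume o: "odd (card S + (p + q))"
  show "smult F G S x = 0"
  proof (cases "finite S")
    case False then show ?thesis by (simp add: smult_inf)
  next
    case True
    have "sgn2 A (S - A) * F A x * G (S - A) x = 0" if "A \<in> Pow S" for A
    proof -
      have "card S = card A + card (S - A)" using card_split True that by auto
      then have "odd (card A + p) \<or> odd (card (S - A) + q)" using o by auto
      then show ?thesis using assms by (auto simp: hom_z)
    qed
    then show ?thesis unfolding smult_def by (intro sum.neutral) blast
  qed
qed

lemma hom_mod: "hom (p mod 2) F = hom p F"
  unfolding hom_def by (metis add.commute even_add even_mod_2_iff)

lemma supp_smult: assumes "supp F" "supp G" shows "supp (smult F G)"
  unfolding supp_def
proof (intro allI impI ext)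
  fix S :: "nat set" and x assume S: "\<not> S \<subseteq> {..<6}"
  have "sgn2 A (S - A) * F A x * G (S - A) x = 0" if "A \<in> Pow S" for A
  proof -
    have "\<not> A \<subseteq> {..<6} \<or> \<not> S - A \<subseteq> {..<6}" using S by auto
    then have "F A x = 0 \<or> G (S - A) x = 0" using assms supp_z by blast
    then show ?thesis by auto
  qed
  then show "smult F G S x = 0" unfolding smult_def by (intro sum.neutral) blast
qed

lemma hol_smult: assumes "\<forall>S. hol (F S)" "\<forall>S. hol (G S)" shows "hol (smult F G S)"
  unfolding smult_def using assms
  by (intro hol_sum' hol_mult hol_cmult) (auto intro: hol_mult hol_cmult)

lemma SF_smult: "F \<in> SF \<Longrightarrow> G \<in> SF \<Longrightarrow> smult F G \<in> SF"
  by (simp add: SF_iff supp_smult hol_smult)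

lemma SF_add: "F \<in> SF \<Longrightarrow> G \<in> SF \<Longrightarrow> (\<lambda>S x. F S x + G S x) \<in> SF"
  by (auto simp: SF_iff supp_def intro!: hol_add)
lemma SF_diff: "F \<in> SF \<Longrightarrow> G \<in> SF \<Longrightarrow> (\<lambda>S x. F S x - G S x) \<in> SF"
  by (auto simp: SF_iff supp_def intro!: hol_minus)
lemma SF_cmult: "F \<in> SF \<Longrightarrow> (\<lambda>S x. c * F S x) \<in> SF"
  by (auto simp: SF_iff supp_def intro!: hol_cmult)
lemma SF_zero[simp]: "(\<lambda>S x. 0) \<in> SF"
  by (auto simp: SF_iff supp_def)
lemma SF_sum: "(\<And>i. i \<in> I \<Longrightarrow> F i \<in> SF) \<Longrightarrow> (\<lambda>S x. \<Sum>i\<in>I. F i S x) \<in> SF"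
  by (auto simp: SF_iff supp_def intro!: hol_sum')
lemma SF_sconst[simp]: "sconst c \<in> SF"
  by (auto simp: SF_iff supp_def sconst_def)
lemma SF_ecoord: assumes "i < 6" shows "ecoord i \<in> SF"
proof -
  have "hol (ecoord i S)" for S
    by (cases "S = {}") (simp_all add: ecoord_def hol_coord assms)
  then show ?thesis by (auto simp: SF_iff supp_def ecoord_def)
qed
lemma SF_ocoord: "j < 6 \<Longrightarrow> ocoord j \<in> SF"
  by (auto simp: SF_iff supp_def ocoord_def)
lemma SF_sproj: "F \<in> SF \<Longrightarrow> sproj p F \<in> SF"
  by (auto simp: SF_iff supp_def sproj_def)

lemma hom_sproj: "p < 2 \<Longrightarrow> hom p (sproj p F)"
  by (auto simp: hom_def sproj_def less_2_cases_iff)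
lemma sproj_decomp: "F = (\<lambda>S x. sproj 0 F S x + sproj 1 F S x)"
  by (auto simp: sproj_def)
lemma sproj_hom_same: "hom p F \<Longrightarrow> p < 2 \<Longrightarrow> sproj p F = F"
  by (auto simp: hom_def sproj_def less_2_cases_iff fun_eq_iff)
lemma sproj_hom_other: "hom p F \<Longrightarrow> p < 2 \<Longrightarrow> q < 2 \<Longrightarrow> q \<noteq> p \<Longrightarrow> sproj q F = (\<lambda>S x. 0)"
  by (auto simp: hom_def sproj_def less_2_cases_iff fun_eq_iff)
lemma hom_zero[simp]: "hom p (\<lambda>S x. 0)" by (simp add: hom_def)
lemma hom_add: "hom p F \<Longrightarrow> hom p G \<Longrightarrow> hom p (\<lambda>S x. F S x + G S x)"
  by (auto simp: hom_def fun_eq_iff)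
lemma hom_diff: "hom p F \<Longrightarrow> hom p G \<Longrightarrow> hom p (\<lambda>S x. F S x - G S x)"
  by (auto simp: hom_def fun_eq_iff)
lemma hom_cmult: "hom p F \<Longrightarrow> hom p (\<lambda>S x. c * F S x)"
  by (auto simp: hom_def fun_eq_iff)
lemma hom_sum: "(\<And>i. i \<in> I \<Longrightarrow> hom p (F i)) \<Longrightarrow> hom p (\<lambda>S x. \<Sum>i\<in>I. F i S x)"
  by (auto simp: hom_def fun_eq_iff)
lemma sproj_add: "sproj p (\<lambda>S x. F S x + G S x) = (\<lambda>S x. sproj p F S x + sproj p G S x)"
  by (auto simp: sproj_def fun_eq_iff)
lemma sproj_sum: "sproj p (\<lambda>S x. \<Sum>i\<in>I. F i S x) = (\<lambda>S x. \<Sum>i\<in>I. sproj p (F i) S x)"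
  by (auto simp: sproj_def fun_eq_iff)



section \<open>Derivations\<close>

definition eps :: "nat \<Rightarrow> nat set \<Rightarrow> complex" where
  "eps j S = (-1) ^ card {s \<in> S. s < j}"

lemma odd_d_eps: "odd_d j F S x = (if j \<notin> S \<and> j < 6 then eps j S * F (insert j S) x else 0)"
  by (simp add: odd_d_def eps_def)

lemma eps_sq: "eps j S * eps j S = 1"
  by (simp add: eps_def flip: power_add)

lemma eps_un: assumes "finite A" "finite B" "A \<inter> B = {}"
  shows "eps j (A \<union> B) = eps j A * eps j B"
proof -
  have "{s \<in> A \<union> B. s < j} = {s \<in> A. s < j} \<union> {s \<in> B. s < j}" by auto
  moreover have "card ({s \<in> A. s < j} \<union> {s \<in> B. s < j}) = card {s \<in> A. s < j} + card {s \<in> B. s < j}"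
    using assms by (intro card_Un_disjoint) auto
  ultimately show ?thesis by (simp add: eps_def power_add)
qed

lemma sgn2_ins_l: assumes "finite A" "finite B" "j \<notin> A"
  shows "sgn2 (insert j A) B = sgn2 A B * eps j B"
proof -
  have "insert j A = A \<union> {j}" by auto
  then show ?thesis using sgn2_un_l[of A "{j}" B] sgn2_single_l[of B j] assms by (simp add: eps_def)
qed

lemma sgn2_ins_r: assumes "finite A" "finite B" "j \<notin> B"
  shows "sgn2 A (insert j B) = sgn2 A B * sgn2 A {j}"
proof -
  have "insert j B = B \<union> {j}" by auto
  then show ?thesis using sgn2_un_r[of A B "{j}"] assms by simp
qed

lemma eps_sgn_j: assumes "finite A" "j \<notin> A"
  shows "eps j A * sgn2 A {j} = (-1) ^ card A"
proof -
  have "{a \<in> A. a < j} \<union> {a \<in> A. j < a} = A" using assms(2) by (auto, metis linorder_neqE_nat)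
  moreover have "card ({a \<in> A. a < j} \<union> {a \<in> A. j < a}) = card {a \<in> A. a < j} + card {a \<in> A. j < a}"
    using assms by (intro card_Un_disjoint) auto
  ultimately show ?thesis using sgn2_single_r[OF assms(1), of j] by (simp add: eps_def power_add)
qed

lemma pow_insert_sum:
  assumes "finite S" "j \<notin> S"
  shows "(\<Sum>A\<in>Pow (insert j S). g A) = (\<Sum>A\<in>Pow S. g A) + (\<Sum>A\<in>Pow S. g (insert j A))"
proof -
  have "Pow (insert j S) = Pow S \<union> insert j ` Pow S" by (rule Pow_insert)
  moreover have "Pow S \<inter> insert j ` Pow S = {}" using assms(2) by auto
  moreover have "inj_on (insert j) (Pow S)" using assms(2) by (auto simp: inj_on_def)
  ultimately show ?thesis using assms(1) by (simp add: sum.union_disjoint sum.reindex)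
qed

lemma minus_one_pow_parity: "odd (n + p) \<Longrightarrow> (-1::complex) ^ n + (-1) ^ p = 0"
  by (simp add: minus_one_power_iff)

lemma odd_d_smult:
  assumes F: "F \<in> SF" and G: "G \<in> SF" and hF: "hom p F"
  shows "odd_d j (smult F G) = (\<lambda>S x. smult (odd_d j F) G S x + (-1) ^ p * smult F (odd_d j G) S x)"
proof (intro ext)
  fix S x
  have sF: "supp F" and sG: "supp G" using F G by (auto simp: SF_iff)
  show "odd_d j (smult F G) S x = smult (odd_d j F) G S x + (-1) ^ p * smult F (odd_d j G) S x"
  proof (cases "finite S \<and> j < 6")
    case c: False
    show ?thesis
    proof (cases "finite S")
      case False then show ?thesis by (simp add: odd_d_eps smult_inf)
    next
      case True then have "\<not> j < 6" using c by simp
      then show ?thesis by (simp add: odd_d_eps smult_def)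
    qed
  next
    case True
    then have fin: "finite S" and j6: "j < 6" by auto
    show ?thesis
    proof (cases "j \<in> S")
      case False
      have fi: "finite (insert j S)" using fin by simp
      have "odd_d j (smult F G) S x = eps j S * smult F G (insert j S) x"
        using False j6 by (simp add: odd_d_eps)
      also have "\<dots> = eps j S * ((\<Sum>A\<in>Pow S. sgn2 A (insert j S - A) * F A x * G (insert j S - A) x)
          + (\<Sum>A\<in>Pow S. sgn2 (insert j A) (insert j S - insert j A) * F (insert j A) x * G (insert j S - insert j A) x))"
        unfolding smult_def by (subst pow_insert_sum[OF fin False]) simp
      also have "\<dots> = (-1) ^ p * smult F (odd_d j G) S x + smult (odd_d j F) G S x"
        unfolding distrib_left smult_def sum_distrib_left
      proof (intro arg_cong2[where f = "(+)"] sum.cong refl)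
        fix A assume A: "A \<in> Pow S"
        have jA: "j \<notin> A" "j \<notin> S - A" using A False by auto
        have fA: "finite A" "finite (S - A)" using A fin by (auto intro: finite_subset)
        have e1: "insert j S - A = insert j (S - A)" using jA by auto
        have e2: "S = A \<union> (S - A)" "A \<inter> (S - A) = {}" using A by auto
        have es: "eps j S = eps j A * eps j (S - A)" using eps_un[OF fA e2(2)] e2(1) by metis
        show "eps j S * (sgn2 A (insert j S - A) * F A x * G (insert j S - A) x) =
            (-1) ^ p * (sgn2 A (S - A) * F A x * odd_d j G (S - A) x)"
        proof (cases "odd (card A + p)")
          case True then show ?thesis using hF by (simp add: hom_z)
        next
          case False
          have "eps j S * sgn2 A (insert j S - A) = (eps j A * sgn2 A {j}) * eps j (S - A) * sgn2 A (S - A)"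
            unfolding e1 es using sgn2_ins_r[OF fA(1,2) jA(2)] by (simp add: algebra_simps)
          also have "\<dots> = (-1) ^ p * eps j (S - A) * sgn2 A (S - A)"
            using eps_sgn_j[OF fA(1) jA(1)] False by (simp add: minus_one_power_iff)
          finally show ?thesis using jA j6 e1 by (simp add: odd_d_eps algebra_simps)
        qed
      next
        fix A assume A: "A \<in> Pow S"
        have jA: "j \<notin> A" "j \<notin> S - A" using A False by auto
        have fA: "finite A" "finite (S - A)" using A fin by (auto intro: finite_subset)
        have e1: "insert j S - insert j A = S - A" using jA by auto
        have e2: "S = A \<union> (S - A)" "A \<inter> (S - A) = {}" using A by auto
        have es: "eps j S = eps j A * eps j (S - A)" using eps_un[OF fA e2(2)] e2(1) by metis
        have "eps j S * sgn2 (insert j A) (S - A) = eps j A * sgn2 A (S - A) * (eps j (S - A) * eps j (S - A))"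
          unfolding es sgn2_ins_l[OF fA jA(1)] by (simp add: algebra_simps)
        then have "eps j S * sgn2 (insert j A) (S - A) = eps j A * sgn2 A (S - A)" by (simp add: eps_sq)
        then show "eps j S * (sgn2 (insert j A) (insert j S - insert j A) * F (insert j A) x * G (insert j S - insert j A) x) =
            sgn2 A (S - A) * odd_d j F A x * G (S - A) x"
          unfolding e1 using jA j6 by (simp add: odd_d_eps algebra_simps)
      qed
      finally show ?thesis by simp
    next
      case True
      define S' where "S' = S - {j}"
      have S: "S = insert j S'" "j \<notin> S'" using True by (auto simp: S'_def)
      have fin': "finite S'" using fin by (simp add: S'_def)
      have "smult (odd_d j F) G S x + (-1) ^ p * smult F (odd_d j G) S x =
        ((\<Sum>A\<in>Pow S'. sgn2 A (S - A) * odd_d j F A x * G (S - A) x) +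
         (\<Sum>A\<in>Pow S'. sgn2 (insert j A) (S - insert j A) * odd_d j F (insert j A) x * G (S - insert j A) x)) +
        (-1) ^ p * ((\<Sum>A\<in>Pow S'. sgn2 A (S - A) * F A x * odd_d j G (S - A) x) +
         (\<Sum>A\<in>Pow S'. sgn2 (insert j A) (S - insert j A) * F (insert j A) x * odd_d j G (S - insert j A) x))"
        unfolding smult_def S(1) by (simp add: pow_insert_sum[OF fin' S(2)])
      also have "\<dots> = (\<Sum>A\<in>Pow S'. sgn2 A (S - A) * odd_d j F A x * G (S - A) x) +
         (-1) ^ p * (\<Sum>A\<in>Pow S'. sgn2 (insert j A) (S - insert j A) * F (insert j A) x * odd_d j G (S - insert j A) x)"
      proof -
        have "odd_d j F (insert j A) x = 0" for A by (simp add: odd_d_eps)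
        moreover have "odd_d j G (S - A) x = 0" if "A \<in> Pow S'" for A
          using that S by (auto simp: odd_d_eps)
        ultimately show ?thesis by simp
      qed
      also have "\<dots> = (\<Sum>A\<in>Pow S'. sgn2 A (S - A) * odd_d j F A x * G (S - A) x +
         (-1) ^ p * (sgn2 (insert j A) (S - insert j A) * F (insert j A) x * odd_d j G (S - insert j A) x))"
        by (simp add: sum.distrib sum_distrib_left)
      also have "\<dots> = 0"
      proof (intro sum.neutral ballI)
        fix A assume A: "A \<in> Pow S'"
        have jA: "j \<notin> A" using A S by auto
        have fA: "finite A" "finite (S' - A)" using A fin' by (auto intro: finite_subset)
        have jB: "j \<notin> S' - A" using S by auto
        have e1: "S - A = insert j (S' - A)" using S jA by auto
        have e2: "S - insert j A = S' - A" using S by auto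
        have e3: "insert j (S' - A) = S - A" using e1 by simp
        show "sgn2 A (S - A) * odd_d j F A x * G (S - A) x +
         (-1) ^ p * (sgn2 (insert j A) (S - insert j A) * F (insert j A) x * odd_d j G (S - insert j A) x) = 0"
        proof (cases "odd (card (insert j A) + p)")
          case True then show ?thesis using hF jA j6 by (simp add: hom_z odd_d_eps)
        next
          case False
          then have o: "odd (card A + p)" using fA jA by simp
          have t1: "sgn2 A (S - A) * odd_d j F A x * G (S - A) x =
              sgn2 A (S' - A) * (eps j A * sgn2 A {j}) * F (insert j A) x * G (S - A) x"
            using jA j6 unfolding e1 by (simp add: odd_d_eps sgn2_ins_r[OF fA jB] algebra_simps)
          have t2: "sgn2 (insert j A) (S - insert j A) * F (insert j A) x * odd_d j G (S - insert j A) x =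
              sgn2 A (S' - A) * (eps j (S' - A) * eps j (S' - A)) * F (insert j A) x * G (S - A) x"
            using jB j6 unfolding e2 by (simp add: odd_d_eps sgn2_ins_l[OF fA jA] e3 algebra_simps)
          have m: "(-1::complex) ^ card A = - ((-1) ^ p)"
            using minus_one_pow_parity[OF o] by (simp add: eq_neg_iff_add_eq_0)
          show ?thesis unfolding t1 t2 eps_sq eps_sgn_j[OF fA(1) jA] m by simp
        qed
      qed
      finally show ?thesis using True by (simp add: odd_d_eps)
    qed
  qed
qed


lemma hol_pd_cmult: "hol f \<Longrightarrow> pd i (\<lambda>x. c * f x) = (\<lambda>x. c * pd i f x)"
  using hol_pd_mult[OF hol_const, of f i c] by simp

lemma even_d_smult:
  assumes F: "F \<in> SF" and G: "G \<in> SF"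
  shows "even_d i (smult F G) = (\<lambda>S x. smult (even_d i F) G S x + smult F (even_d i G) S x)"
proof (intro ext)
  fix S x
  have hF: "hol (F A)" and hG: "hol (G A)" for A using F G by (auto simp: SF_iff)
  show "even_d i (smult F G) S x = smult (even_d i F) G S x + smult F (even_d i G) S x"
  proof (cases "finite S")
    case False
    then have "smult F G S = (\<lambda>x. 0)" by (simp add: fun_eq_iff smult_inf)
    then show ?thesis using False by (simp add: even_d_def smult_inf)
  next
    case True
    have "even_d i (smult F G) S = pd i (\<lambda>x. \<Sum>A\<in>Pow S. sgn2 A (S - A) * F A x * G (S - A) x)"
      by (simp add: even_d_def smult_def)
    also have "\<dots> = (\<lambda>x. \<Sum>A\<in>Pow S. pd i (\<lambda>x. sgn2 A (S - A) * F A x * G (S - A) x) x)"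
      using True by (intro hol_pd_sum) (auto intro!: hol_mult hol_cmult hF hG)
    also have "\<dots> = (\<lambda>x. \<Sum>A\<in>Pow S. sgn2 A (S - A) * pd i (F A) x * G (S - A) x
                                + sgn2 A (S - A) * F A x * pd i (G (S - A)) x)"
      by (simp add: hol_pd_mult hol_cmult hF hG hol_pd_cmult algebra_simps)
    finally show ?thesis by (simp add: smult_def even_d_def sum.distrib)
  qed
qed

lemma SF_even_d: "F \<in> SF \<Longrightarrow> even_d i F \<in> SF"
  by (auto simp: SF_iff supp_def even_d_def hol_pd)

lemma SF_odd_d: assumes "F \<in> SF" shows "odd_d j F \<in> SF"
proof -
  have sF: "supp F" and hF: "\<And>S. hol (F S)" using assms by (auto simp: SF_iff)
  have "odd_d j F S = (\<lambda>_. 0)" if S: "\<not> S \<subseteq> {..<6}" for S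
  proof -
    have ni: "\<not> insert j S \<subseteq> {..<6}" using S by auto
    show ?thesis by (intro ext) (simp add: odd_d_eps supp_z[OF sF ni])
  qed
  moreover have "hol (odd_d j F S)" for S unfolding odd_d_eps
    by (cases "j \<notin> S \<and> j < 6") (auto intro: hol_cmult hF)
  ultimately show ?thesis by (simp add: SF_iff supp_def)
qed

lemma SF_dcoord: "F \<in> SF \<Longrightarrow> dcoord k F \<in> SF"
  by (simp add: dcoord_def SF_even_d SF_odd_d)

definition kp :: "nat \<Rightarrow> nat" where "kp k = (if k < 6 then 0 else 1)"

lemma hom_even_d: "hom p F \<Longrightarrow> hom p (even_d i F)"
  by (auto simp: hom_def even_d_def)

lemma hom_odd_d: assumes "hom p F" "supp F" shows "hom (p + 1) (odd_d j F)"
  unfolding hom_def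
proof (intro allI impI ext)
  fix S :: "nat set" and x assume o: "odd (card S + (p + 1))"
  show "odd_d j F S x = 0"
  proof (cases "j \<notin> S \<and> j < 6 \<and> finite S")
    case True
    then have "odd (card (insert j S) + p)" using o by simp
    then show ?thesis using assms True by (simp add: odd_d_eps hom_z)
  next
    case False
    then show ?thesis using assms by (auto simp: odd_d_eps supp_inf)
  qed
qed

lemma hom_dcoord: "hom p F \<Longrightarrow> F \<in> SF \<Longrightarrow> hom (p + kp k) (dcoord k F)"
  using hom_odd_d[of p F "k - 6"] hom_even_d[of p F k] by (simp add: dcoord_def kp_def SF_iff)

lemma dcoord_smult:
  assumes F: "F \<in> SF" and G: "G \<in> SF" and hF: "hom p F"
  shows "dcoord k (smult F G) = (\<lambda>S x. smult (dcoord k F) G S x + (-1) ^ (p * kp k) * smult F (dcoord k G) S x)"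
  by (simp add: dcoord_def kp_def even_d_smult[OF F G] odd_d_smult[OF F G hF])

lemma even_d_add: "F \<in> SF \<Longrightarrow> G \<in> SF \<Longrightarrow>
    even_d i (\<lambda>S x. F S x + G S x) = (\<lambda>S x. even_d i F S x + even_d i G S x)"
  by (simp add: even_d_def hol_pd_add SF_iff)
lemma even_d_diff: "F \<in> SF \<Longrightarrow> G \<in> SF \<Longrightarrow>
    even_d i (\<lambda>S x. F S x - G S x) = (\<lambda>S x. even_d i F S x - even_d i G S x)"
proof -
  assume a: "F \<in> SF" "G \<in> SF"
  have "pd i (\<lambda>x. f x - g x) = (\<lambda>x. pd i f x - pd i g x)" if "hol f" "hol g" for f g
    using that by (intro ext) (simp add: pd_def dif_at hol_dif)
  then show ?thesis using a by (simp add: even_d_def SF_iff)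
qed
lemma even_d_cmult: "F \<in> SF \<Longrightarrow> even_d i (\<lambda>S x. c * F S x) = (\<lambda>S x. c * even_d i F S x)"
  by (simp add: even_d_def hol_pd_cmult SF_iff)
lemma even_d_sum: "finite I \<Longrightarrow> (\<And>a. a \<in> I \<Longrightarrow> F a \<in> SF) \<Longrightarrow>
    even_d i (\<lambda>S x. \<Sum>a\<in>I. F a S x) = (\<lambda>S x. \<Sum>a\<in>I. even_d i (F a) S x)"
  by (simp add: even_d_def hol_pd_sum SF_iff)
lemma even_d_zero[simp]: "even_d i (\<lambda>S x. 0) = (\<lambda>S x. 0)"
  by (simp add: even_d_def)

lemma odd_d_add: "odd_d j (\<lambda>S x. F S x + G S x) = (\<lambda>S x. odd_d j F S x + odd_d j G S x)"
  by (simp add: odd_d_eps fun_eq_iff algebra_simps)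
lemma odd_d_diff: "odd_d j (\<lambda>S x. F S x - G S x) = (\<lambda>S x. odd_d j F S x - odd_d j G S x)"
  by (simp add: odd_d_eps fun_eq_iff algebra_simps)
lemma odd_d_cmult: "odd_d j (\<lambda>S x. c * F S x) = (\<lambda>S x. c * odd_d j F S x)"
  by (simp add: odd_d_eps fun_eq_iff algebra_simps)
lemma odd_d_sum: "odd_d j (\<lambda>S x. \<Sum>a\<in>I. F a S x) = (\<lambda>S x. \<Sum>a\<in>I. odd_d j (F a) S x)"
  by (simp add: odd_d_eps fun_eq_iff sum_distrib_left)
lemma odd_d_zero[simp]: "odd_d j (\<lambda>S x. 0) = (\<lambda>S x. 0)"
  by (simp add: odd_d_eps fun_eq_iff)

lemma dcoord_add: "F \<in> SF \<Longrightarrow> G \<in> SF \<Longrightarrow>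
    dcoord k (\<lambda>S x. F S x + G S x) = (\<lambda>S x. dcoord k F S x + dcoord k G S x)"
  by (simp add: dcoord_def even_d_add odd_d_add)
lemma dcoord_diff: "F \<in> SF \<Longrightarrow> G \<in> SF \<Longrightarrow>
    dcoord k (\<lambda>S x. F S x - G S x) = (\<lambda>S x. dcoord k F S x - dcoord k G S x)"
  by (simp add: dcoord_def even_d_diff odd_d_diff)
lemma dcoord_cmult: "F \<in> SF \<Longrightarrow> dcoord k (\<lambda>S x. c * F S x) = (\<lambda>S x. c * dcoord k F S x)"
  by (simp add: dcoord_def even_d_cmult odd_d_cmult)
lemma dcoord_sum: "finite I \<Longrightarrow> (\<And>a. a \<in> I \<Longrightarrow> F a \<in> SF) \<Longrightarrow>
    dcoord k (\<lambda>S x. \<Sum>a\<in>I. F a S x) = (\<lambda>S x. \<Sum>a\<in>I. dcoord k (F a) S x)"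
  by (simp add: dcoord_def even_d_sum odd_d_sum)
lemma dcoord_zero[simp]: "dcoord k (\<lambda>S x. 0) = (\<lambda>S x. 0)"
  by (simp add: dcoord_def)
lemma dcoord_sconst[simp]: "dcoord k (sconst c) = (\<lambda>S x. 0)"
  by (auto simp: dcoord_def even_d_def odd_d_eps sconst_def fun_eq_iff)



section \<open>Vector fields\<close>

definition VF :: "vf \<Rightarrow> bool" where "VF X \<longleftrightarrow> (\<forall>k. X k \<in> SF)"
definition hvf :: "nat \<Rightarrow> vf \<Rightarrow> bool" where "hvf p X \<longleftrightarrow> (\<forall>k. hom (p + kp k) (X k))"

lemma VF_SF: "VF X \<Longrightarrow> X k \<in> SF" by (simp add: VF_def)
lemma hvf_hom: "hvf p X \<Longrightarrow> hom (p + kp k) (X k)" by (simp add: hvf_def)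

lemma neg1_mod: "(-1::complex) ^ (n mod 2) = (-1) ^ n"
  by (simp add: minus_one_power_iff)
lemma neg1_eq: "even m = even n \<Longrightarrow> (-1::complex) ^ m = (-1) ^ n"
  by (simp add: minus_one_power_iff)

lemma hom_par: "even m = even n \<Longrightarrow> hom m F = hom n F"
  unfolding hom_def by simp

lemma vapply_add: "F \<in> SF \<Longrightarrow> G \<in> SF \<Longrightarrow>
    vapply X (\<lambda>S x. F S x + G S x) = (\<lambda>S x. vapply X F S x + vapply X G S x)"
  by (simp add: vapply_def dcoord_add smult_add_r sum.distrib)
lemma vapply_diff: "F \<in> SF \<Longrightarrow> G \<in> SF \<Longrightarrow>
    vapply X (\<lambda>S x. F S x - G S x) = (\<lambda>S x. vapply X F S x - vapply X G S x)"
  by (simp add: vapply_def dcoord_diff smult_diff_r sum_subtractf)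
lemma vapply_cmult: "F \<in> SF \<Longrightarrow> vapply X (\<lambda>S x. c * F S x) = (\<lambda>S x. c * vapply X F S x)"
  by (simp add: vapply_def dcoord_cmult smult_cmult_r sum_distrib_left)
lemma vapply_sum: "finite I \<Longrightarrow> (\<And>a. a \<in> I \<Longrightarrow> F a \<in> SF) \<Longrightarrow>
    vapply X (\<lambda>S x. \<Sum>a\<in>I. F a S x) = (\<lambda>S x. \<Sum>a\<in>I. vapply X (F a) S x)"
  by (simp add: vapply_def dcoord_sum smult_sum_r) (simp add: fun_eq_iff sum.swap[of _ I])
lemma vapply_zero[simp]: "vapply X (\<lambda>S x. 0) = (\<lambda>S x. 0)"
  by (simp add: vapply_def)
lemma vapply_sconst[simp]: "vapply X (sconst c) = (\<lambda>S x. 0)"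
  by (simp add: vapply_def)

lemma vapply_fadd: "vapply (\<lambda>k S x. X k S x + Y k S x) g = (\<lambda>S x. vapply X g S x + vapply Y g S x)"
  by (simp add: vapply_def smult_add_l sum.distrib)
lemma vapply_fsum: "vapply (\<lambda>k S x. \<Sum>a\<in>I. X a k S x) g = (\<lambda>S x. \<Sum>a\<in>I. vapply (X a) g S x)"
  by (simp add: vapply_def smult_sum_l) (simp add: fun_eq_iff sum.swap[of _ I])
lemma vapply_fzero[simp]: "vapply (\<lambda>k S x. 0) g = (\<lambda>S x. 0)"
  by (simp add: vapply_def)

lemma vapply_vscale: "vapply (vscale f X) g = smult f (vapply X g)"
  by (simp add: vapply_def vscale_def smult_assoc smult_sum_r)

lemma SF_vapply: "VF X \<Longrightarrow> g \<in> SF \<Longrightarrow> vapply X g \<in> SF"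
  unfolding vapply_def by (intro SF_sum SF_smult SF_dcoord) (auto simp: VF_def)

lemma hom_vapply:
  assumes "hvf p X" "VF X" "hom s g" "g \<in> SF"
  shows "hom (p + s) (vapply X g)"
  unfolding vapply_def
proof (intro hom_sum)
  fix k
  have "hom (p + kp k + (s + kp k)) (smult (X k) (dcoord k g))"
    using assms by (intro hom_smult hom_dcoord) (auto simp: hvf_def)
  then show "hom (p + s) (smult (X k) (dcoord k g))" by (subst hom_par[of _ "p + kp k + (s + kp k)"]) auto
qed

lemma vapply_smult:
  assumes hX: "hvf p X" and X: "VF X" and g: "g \<in> SF" and h: "h \<in> SF" and hg: "hom s g"
  shows "vapply X (smult g h) = (\<lambda>S x. smult (vapply X g) h S x + (-1::complex) ^ (p * s) * smult g (vapply X h) S x)"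
proof -
  have sg: "supp g" using g by (rule SF_supp)
  have "smult (X k) (dcoord k (smult g h)) =
      (\<lambda>S x. smult (smult (X k) (dcoord k g)) h S x + (-1::complex) ^ (p * s) * smult g (smult (X k) (dcoord k h)) S x)"
    for k
  proof -
    have XK: "X k \<in> SF" "supp (X k)" using VF_SF[OF X] SF_supp by blast+
    have c: "smult (X k) g = (\<lambda>S x. (-1::complex) ^ (s * (p + kp k)) * smult g (X k) S x)"
      using smult_comm[OF sg XK(2) hg hvf_hom[OF hX]] .
    have e: "(-1::complex) ^ (s * kp k) * (-1) ^ (s * (p + kp k)) = (-1) ^ (p * s)"
      by (simp flip: power_add) (rule neg1_eq, auto simp: algebra_simps)
    have a1: "smult (X k) (smult (dcoord k g) h) = smult (smult (X k) (dcoord k g)) h"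
      by (simp add: smult_assoc)
    have a2: "smult (X k) (smult g (dcoord k h)) = (\<lambda>S x. (-1::complex) ^ (s * (p + kp k)) * smult g (smult (X k) (dcoord k h)) S x)"
      by (simp only: smult_assoc[symmetric] c smult_cmult_l)
    show ?thesis
      unfolding dcoord_smult[OF g h hg] smult_add_r smult_cmult_r a1 a2
      by (simp add: mult.assoc[symmetric] e)
  qed
  then show ?thesis
    by (simp add: vapply_def sum.distrib smult_sum_l smult_sum_r sum_distrib_left)
qed

section \<open>Brackets\<close>

lemma vpart_same: "hvf p X \<Longrightarrow> p < 2 \<Longrightarrow> vpart p X = X"
proof (rule ext)
  fix k assume h: "hvf p X" and p: "p < 2"
  have "hom ((p + kp k) mod 2) (X k)" using h by (simp add: hvf_def hom_mod)
  then show "vpart p X k = X k" by (simp add: vpart_def kp_def sproj_hom_same)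
qed

lemma vpart_other: assumes h: "hvf p X" and p: "p < 2" "q < 2" "q \<noteq> p"
  shows "vpart q X = (\<lambda>k S x. 0)"
proof (rule ext)
  fix k
  have "hom ((p + kp k) mod 2) (X k)" using h by (simp add: hvf_def hom_mod)
  moreover have "(q + kp k) mod 2 \<noteq> (p + kp k) mod 2" using p by (auto simp: kp_def less_2_cases_iff)
  moreover have "vpart q X k = sproj ((q + kp k) mod 2) (X k)" by (simp add: vpart_def kp_def)
  ultimately show "vpart q X k = (\<lambda>S x. 0)"
    using sproj_hom_other[of "(p + kp k) mod 2" "X k" "(q + kp k) mod 2"] by simp
qed

lemma hbr_zero_l[simp]: "hbr p q (\<lambda>k S x. 0) B = (\<lambda>k S x. 0)"
  by (simp add: hbr_def)
lemma hbr_zero_r[simp]: "hbr p q A (\<lambda>k S x. 0) = (\<lambda>k S x. 0)"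
  by (simp add: hbr_def)

lemma sum2: "(\<Sum>p<2. f p) = f 0 + f (1::nat)"
  by (simp add: numeral_2_eq_2)

lemma sbr_hom:
  assumes "hvf a X" "hvf b Y" "a < 2" "b < 2"
  shows "sbr X Y = hbr a b X Y"
proof -
  have e: "sbr X Y = (\<lambda>k S x. hbr 0 0 (vpart 0 X) (vpart 0 Y) k S x + hbr 0 1 (vpart 0 X) (vpart 1 Y) k S x
     + (hbr 1 0 (vpart 1 X) (vpart 0 Y) k S x + hbr 1 1 (vpart 1 X) (vpart 1 Y) k S x))"
    by (simp add: sbr_def sum2)
  have xa: "vpart a X = X" "vpart b Y = Y" using assms by (simp_all add: vpart_same)
  have xo: "vpart (1 - a) X = (\<lambda>k S x. 0)" "vpart (1 - b) Y = (\<lambda>k S x. 0)"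
  proof -
    have "1 - a < 2" "1 - a \<noteq> a" "1 - b < 2" "1 - b \<noteq> b" using assms by arith+
    then show "vpart (1 - a) X = (\<lambda>k S x. 0)" "vpart (1 - b) Y = (\<lambda>k S x. 0)"
      using assms by (auto intro!: vpart_other)
  qed
  show ?thesis
  proof (cases "a = 0")
    case True
    then have x: "vpart 0 X = X" "vpart 1 X = (\<lambda>k S x. 0)" using xa xo by auto
    show ?thesis
    proof (cases "b = 0")
      case True
      then have y: "vpart 0 Y = Y" "vpart 1 Y = (\<lambda>k S x. 0)" using xa xo by auto
      show ?thesis unfolding e x y using \<open>a = 0\<close> True by simp
    next
      case False
      then have "b = 1" using assms by simp
      then have y: "vpart 1 Y = Y" "vpart 0 Y = (\<lambda>k S x. 0)" using xa xo by auto
      show ?thesis unfolding e x y using \<open>a = 0\<close> \<open>b = 1\<close> by simp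
    qed
  next
    case False
    then have "a = 1" using assms by simp
    then have x: "vpart 1 X = X" "vpart 0 X = (\<lambda>k S x. 0)" using xa xo by auto
    show ?thesis
    proof (cases "b = 0")
      case True
      then have y: "vpart 0 Y = Y" "vpart 1 Y = (\<lambda>k S x. 0)" using xa xo by auto
      show ?thesis unfolding e x y using \<open>a = 1\<close> True by simp
    next
      case False
      then have "b = 1" using assms by simp
      then have y: "vpart 1 Y = Y" "vpart 0 Y = (\<lambda>k S x. 0)" using xa xo by auto
      show ?thesis unfolding e x y using \<open>a = 1\<close> \<open>b = 1\<close> by simp
    qed
  qed
qed


lemma VF_vpart: "VF X \<Longrightarrow> VF (vpart p X)"
  by (simp add: VF_def vpart_def SF_sproj)

lemma VF_sum: "(\<And>i. i \<in> I \<Longrightarrow> VF (X i)) \<Longrightarrow> VF (\<lambda>k S x. \<Sum>i\<in>I. X i k S x)"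
  by (simp add: VF_def SF_sum)

lemma VF_vscale: "g \<in> SF \<Longrightarrow> VF B \<Longrightarrow> VF (vscale g B)"
  by (simp add: VF_def vscale_def SF_smult)

lemma hvf_vscale: "hvf b B \<Longrightarrow> hom s g \<Longrightarrow> hvf (s + b) (vscale g B)"
  unfolding hvf_def vscale_def using hom_smult by (metis add.assoc)

lemma vpart_sum: "vpart p (\<lambda>k S x. \<Sum>i\<in>I. X i k S x) = (\<lambda>k S x. \<Sum>i\<in>I. vpart p (X i) k S x)"
  by (simp add: vpart_def sproj_sum)

lemma hbr_sum_r: assumes "finite I" "\<And>i. i \<in> I \<Longrightarrow> VF (B i)"
  shows "hbr p q A (\<lambda>k S x. \<Sum>i\<in>I. B i k S x) = (\<lambda>k S x. \<Sum>i\<in>I. hbr p q A (B i) k S x)"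
  using assms by (simp add: hbr_def vapply_sum VF_SF vapply_fsum sum_subtractf sum_distrib_left)

lemma hbr_sum_l: assumes "finite I" "\<And>i. i \<in> I \<Longrightarrow> VF (A i)"
  shows "hbr p q (\<lambda>k S x. \<Sum>i\<in>I. A i k S x) B = (\<lambda>k S x. \<Sum>i\<in>I. hbr p q (A i) B k S x)"
  using assms by (simp add: hbr_def vapply_sum VF_SF vapply_fsum sum_subtractf sum_distrib_left)

lemma sbr_sum_r: assumes "finite I" "\<And>i. i \<in> I \<Longrightarrow> VF (Y i)"
  shows "sbr X (\<lambda>k S x. \<Sum>i\<in>I. Y i k S x) = (\<lambda>k S x. \<Sum>i\<in>I. sbr X (Y i) k S x)"
proof -
  have "hbr p q (vpart p X) (vpart q (\<lambda>k S x. \<Sum>i\<in>I. Y i k S x)) =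
      (\<lambda>k S x. \<Sum>i\<in>I. hbr p q (vpart p X) (vpart q (Y i)) k S x)" for p q
    unfolding vpart_sum using assms by (intro hbr_sum_r) (auto intro: VF_vpart)
  then show ?thesis unfolding sbr_def by (simp add: fun_eq_iff sum.swap[of _ I])
qed

lemma sbr_sum_l: assumes "finite I" "\<And>i. i \<in> I \<Longrightarrow> VF (X i)"
  shows "sbr (\<lambda>k S x. \<Sum>i\<in>I. X i k S x) Y = (\<lambda>k S x. \<Sum>i\<in>I. sbr (X i) Y k S x)"
proof -
  have "hbr p q (vpart p (\<lambda>k S x. \<Sum>i\<in>I. X i k S x)) (vpart q Y) =
      (\<lambda>k S x. \<Sum>i\<in>I. hbr p q (vpart p (X i)) (vpart q Y) k S x)" for p q
    unfolding vpart_sum using assms by (intro hbr_sum_l) (auto intro: VF_vpart)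
  then show ?thesis unfolding sbr_def by (simp add: fun_eq_iff sum.swap[of _ I])
qed

lemma hbr_scale_r:
  assumes hA: "hvf a A" and hB: "hvf b B" and A: "VF A" and B: "VF B" and g: "g \<in> SF" and hg: "hom s g"
    and c: "even c = even (s + b)"
  shows "hbr a c A (vscale g B) =
    (\<lambda>k S x. smult (vapply A g) (B k) S x + (-1::complex) ^ (a * s) * smult g (hbr a b A B k) S x)"
proof (intro ext)
  fix k S x
  have e: "(-1::complex) ^ (a * c) = (-1) ^ (a * s) * (-1) ^ (a * b)"
    by (simp flip: power_add) (rule neg1_eq, use c in \<open>auto simp: algebra_simps\<close>)
  have "hbr a b A B k = (\<lambda>S x. vapply A (B k) S x - (-1::complex) ^ (a * b) * vapply B (A k) S x)"
    by (simp add: hbr_def)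
  then have "smult g (hbr a b A B k) = (\<lambda>S x. smult g (vapply A (B k)) S x - (-1::complex) ^ (a * b) * smult g (vapply B (A k)) S x)"
    by (simp add: smult_diff_r smult_cmult_r)
  then show "hbr a c A (vscale g B) k S x =
      smult (vapply A g) (B k) S x + (-1::complex) ^ (a * s) * smult g (hbr a b A B k) S x"
    unfolding hbr_def vscale_def vapply_smult[OF hA A g VF_SF[OF B] hg]
    using vapply_vscale[of g B "A k", unfolded vscale_def] e by (simp add: algebra_simps)
qed

lemma hbr_scale_l:
  assumes hA: "hvf a A" and hB: "hvf b B" and A: "VF A" and B: "VF B" and f: "f \<in> SF" and hf: "hom s f"
    and c: "even c = even (s + a)"
  shows "hbr c b (vscale f A) B =
    (\<lambda>k S x. smult f (hbr a b A B k) S x - (-1::complex) ^ (c * b) * smult (vapply B f) (A k) S x)"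
proof (intro ext)
  fix k S x
  have e: "(-1::complex) ^ (c * b) * (-1) ^ (b * s) = (-1) ^ (a * b)"
    by (simp flip: power_add) (rule neg1_eq, use c in \<open>auto simp: algebra_simps\<close>)
  have "hbr a b A B k = (\<lambda>S x. vapply A (B k) S x - (-1::complex) ^ (a * b) * vapply B (A k) S x)"
    by (simp add: hbr_def)
  then have "smult f (hbr a b A B k) = (\<lambda>S x. smult f (vapply A (B k)) S x - (-1::complex) ^ (a * b) * smult f (vapply B (A k)) S x)"
    by (simp add: smult_diff_r smult_cmult_r)
  moreover have "vapply (vscale f A) (B k) = smult f (vapply A (B k))" by (rule vapply_vscale)
  ultimately show "hbr c b (vscale f A) B k S x =
      smult f (hbr a b A B k) S x - (-1::complex) ^ (c * b) * smult (vapply B f) (A k) S x"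
    unfolding hbr_def
    using vapply_smult[OF hB B f VF_SF[OF A] hf] e
    by (simp add: vscale_def algebra_simps)
qed



section \<open>Tables: explicit superfunctions\<close>

lemma hol_if: "hol m \<Longrightarrow> hol (\<lambda>x. if c then m x else 0)"
  by (cases c) auto

definition tab :: "(nat set \<times> (pt \<Rightarrow> complex)) list \<Rightarrow> sfun" where
  "tab L = (\<lambda>S x. \<Sum>(T, m)\<leftarrow>L. if S = T then m x else 0)"

lemma tab_nil: "tab [] = (\<lambda>S x. 0)" by (simp add: tab_def)
lemma tab_cons: "tab ((T, m) # L) = (\<lambda>S x. (if S = T then m x else 0) + tab L S x)"
  by (simp add: tab_def)

lemma sconst_tab: "sconst c = tab [({}, \<lambda>x. c)]"
  by (simp add: tab_def sconst_def)
lemma ecoord_tab: "ecoord i = tab [({}, \<lambda>x. x i)]"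
  by (simp add: tab_def ecoord_def)
lemma ocoord_tab: "ocoord j = tab [({j}, \<lambda>x. 1)]"
  by (simp add: tab_def ocoord_def)

lemma tab_append: "tab (L1 @ L2) = (\<lambda>S x. tab L1 S x + tab L2 S x)"
  by (simp add: tab_def)

lemma tab_add: "(\<lambda>S x. tab L1 S x + tab L2 S x) = tab (L1 @ L2)"
  by (simp add: tab_def)
lemma sadd_tab: "sadd (tab L1) (tab L2) = tab (L1 @ L2)"
  by (simp add: tab_def sadd_def)

definition tscale :: "complex \<Rightarrow> (nat set \<times> (pt \<Rightarrow> complex)) list \<Rightarrow> (nat set \<times> (pt \<Rightarrow> complex)) list" where
  "tscale c L = map (\<lambda>(T, m). (T, \<lambda>x. c * m x)) L"

lemma tscale_simps[simp]: "tscale c [] = []" "tscale c ((T, m) # L) = (T, \<lambda>x. c * m x) # tscale c L"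
  by (simp_all add: tscale_def)

lemma tab_cmult: "(\<lambda>S x. c * tab L S x) = tab (tscale c L)"
  by (induction L) (auto simp: tab_def tscale_def algebra_simps fun_eq_iff)
lemma sscale_tab: "sscale c (tab L) = tab (tscale c L)"
  by (simp add: sscale_def tab_cmult)
lemma tab_diff: "(\<lambda>S x. tab L1 S x - tab L2 S x) = tab (L1 @ tscale (-1) L2)"
proof -
  have "(\<lambda>S x. tab L1 S x - tab L2 S x) = (\<lambda>S x. tab L1 S x + (-1) * tab L2 S x)" by simp
  also have "\<dots> = tab (L1 @ tscale (-1) L2)"
    by (simp add: tab_append tab_cmult[symmetric])
  finally show ?thesis .
qed

definition mono :: "nat set \<Rightarrow> (pt \<Rightarrow> complex) \<Rightarrow> sfun" where
  "mono T m = (\<lambda>S x. if S = T then m x else 0)"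

lemma smult_mono:
  assumes "finite T" "finite U"
  shows "smult (mono T m) (mono U n) =
    (if T \<inter> U = {} then mono (T \<union> U) (\<lambda>x. sgn2 T U * m x * n x) else (\<lambda>S x. 0))"
proof (intro ext)
  fix S x
  show "smult (mono T m) (mono U n) S x =
    (if T \<inter> U = {} then mono (T \<union> U) (\<lambda>x. sgn2 T U * m x * n x) else (\<lambda>S x. 0)) S x"
  proof (cases "finite S")
    case False
    then have "S \<noteq> T \<union> U" using assms by auto
    then show ?thesis using False by (simp add: smult_inf mono_def)
  next
    case True
    have "smult (mono T m) (mono U n) S x =
        (\<Sum>A\<in>Pow S. if A = T then (if S - T = U then sgn2 T U * m x * n x else 0) else 0)"
      unfolding smult_def mono_def by (intro sum.cong) auto
    also have "\<dots> = (if T \<subseteq> S \<and> S - T = U then sgn2 T U * m x * n x else 0)"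
      using True by (simp add: sum.delta')
    also have "\<dots> = (if T \<inter> U = {} then mono (T \<union> U) (\<lambda>x. sgn2 T U * m x * n x) else (\<lambda>S x. 0)) S x"
      by (auto simp: mono_def)
    finally show ?thesis .
  qed
qed

lemma tab_mono: "tab L = (\<lambda>S x. \<Sum>(T, m)\<leftarrow>L. mono T m S x)"
  by (simp add: tab_def mono_def)

lemma smult_sum_list_l: "smult (\<lambda>S x. \<Sum>y\<leftarrow>L. F y S x) H = (\<lambda>S x. \<Sum>y\<leftarrow>L. smult (F y) H S x)"
  by (induction L) (simp_all add: smult_add_l)
lemma smult_sum_list_r: "smult H (\<lambda>S x. \<Sum>y\<leftarrow>L. F y S x) = (\<lambda>S x. \<Sum>y\<leftarrow>L. smult H (F y) S x)"
  by (induction L) (simp_all add: smult_add_r)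

definition tmul :: "(nat set \<times> (pt \<Rightarrow> complex)) list \<Rightarrow> (nat set \<times> (pt \<Rightarrow> complex)) list \<Rightarrow> (nat set \<times> (pt \<Rightarrow> complex)) list" where
  "tmul L1 L2 = concat (map (\<lambda>(T, m). concat (map (\<lambda>(U, n).
      if T \<inter> U = {} then [(T \<union> U, \<lambda>x. sgn2 T U * m x * n x)] else []) L2)) L1)"

lemma tmul_simps[simp]:
  "tmul [] L2 = []"
  "tmul ((T, m) # L1) L2 = concat (map (\<lambda>(U, n).
      if T \<inter> U = {} then [(T \<union> U, \<lambda>x. sgn2 T U * m x * n x)] else []) L2) @ tmul L1 L2"
  by (simp_all add: tmul_def)

lemma tab_concat: "tab (concat (map f L)) = (\<lambda>S x. \<Sum>y\<leftarrow>L. tab (f y) S x)"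
  by (induction L) (simp_all add: tab_append tab_nil)

lemma tab_cons_mono: "tab ((T, m) # L) = (\<lambda>S x. mono T m S x + tab L S x)"
  by (simp add: tab_def mono_def)

lemma smult_mono_tab:
  assumes "finite T" "\<forall>(U, n)\<in>set L2. finite U"
  shows "smult (mono T m) (tab L2) = tab (concat (map (\<lambda>(U, n).
      if T \<inter> U = {} then [(T \<union> U, \<lambda>x. sgn2 T U * m x * n x)] else []) L2))"
  using assms(2)
proof (induction L2)
  case Nil then show ?case by (simp add: tab_nil)
next
  case (Cons a L)
  obtain U n where a: "a = (U, n)" by force
  have fU: "finite U" using Cons.prems a by auto
  have "smult (mono T m) (mono U n) = tab (if T \<inter> U = {} then [(T \<union> U, \<lambda>x. sgn2 T U * m x * n x)] else [])"
    by (simp only: smult_mono[OF assms(1) fU]) (cases "T \<inter> U = {}"; simp add: tab_def mono_def)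
  then show ?case using Cons a by (simp add: tab_cons_mono smult_add_r tab_append)
qed

lemma smult_tab:
  assumes "\<forall>(T, m)\<in>set L1. finite T" "\<forall>(U, n)\<in>set L2. finite U"
  shows "smult (tab L1) (tab L2) = tab (tmul L1 L2)"
  using assms(1)
proof (induction L1)
  case Nil then show ?case by (simp add: tab_nil)
next
  case (Cons a L)
  obtain T m where a: "a = (T, m)" by force
  have fT: "finite T" using Cons.prems a by auto
  show ?case using Cons a smult_mono_tab[OF fT assms(2), of m]
    by (simp add: tab_cons_mono smult_add_l tab_append)
qed

definition tpd :: "nat \<Rightarrow> (nat set \<times> (pt \<Rightarrow> complex)) list \<Rightarrow> (nat set \<times> (pt \<Rightarrow> complex)) list" where
  "tpd i L = map (\<lambda>(T, m). (T, pd i m)) L"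

lemma tpd_simps[simp]: "tpd i [] = []" "tpd i ((T, m) # L) = (T, pd i m) # tpd i L"
  by (simp_all add: tpd_def)

lemma even_d_tab: assumes "\<forall>(T, m)\<in>set L. hol m"
  shows "even_d i (tab L) = tab (tpd i L)"
  using assms
proof (induction L)
  case Nil then show ?case by (simp add: tab_nil even_d_def)
next
  case (Cons a L)
  obtain T m where a: "a = (T, m)" by force
  have hm: "hol m" using Cons.prems a by auto
  have IH: "even_d i (tab L) = tab (tpd i L)" using Cons by auto
  have htl: "hol (tab L S)" for S
    using Cons.prems unfolding tab_def
  proof (induction L)
    case Nil then show ?case by simp
  next
    case (Cons b L) then show ?case by (auto intro!: hol_add hol_if split: prod.splits)
  qed
  have "even_d i (tab (a # L)) S = tab (tpd i (a # L)) S" for S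
  proof -
    have "even_d i (tab (a # L)) S = pd i (\<lambda>x. (if S = T then m x else 0) + tab L S x)"
      by (simp add: even_d_def tab_cons a)
    also have "\<dots> = (\<lambda>x. pd i (\<lambda>x. if S = T then m x else 0) x + pd i (tab L S) x)"
      using hm htl by (intro hol_pd_add hol_if) auto
    also have "\<dots> = (\<lambda>x. (if S = T then pd i m x else 0) + tab (tpd i L) S x)"
      using IH by (auto simp: even_d_def fun_eq_iff)
    finally show ?thesis by (simp add: a tab_cons)
  qed
  then show ?case by auto
qed

definition todd :: "nat \<Rightarrow> (nat set \<times> (pt \<Rightarrow> complex)) list \<Rightarrow> (nat set \<times> (pt \<Rightarrow> complex)) list" where
  "todd j L = concat (map (\<lambda>(T, m). if j \<in> T then [(T - {j}, \<lambda>x. eps j T * m x)] else []) L)"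

lemma todd_simps[simp]: "todd j [] = []"
  "todd j ((T, m) # L) = (if j \<in> T then [(T - {j}, \<lambda>x. eps j T * m x)] else []) @ todd j L"
  by (simp_all add: todd_def)

lemma eps_insert_self: "eps j (insert j S) = eps j S"
proof -
  have "{s \<in> insert j S. s < j} = {s \<in> S. s < j}" by auto
  then show ?thesis by (simp add: eps_def)
qed

lemma odd_d_tab: assumes "j < 6"
  shows "odd_d j (tab L) = tab (todd j L)"
proof (induction L)
  case Nil then show ?case by (simp add: tab_nil odd_d_eps fun_eq_iff)
next
  case (Cons a L)
  obtain T m where a: "a = (T, m)" by force
  have "odd_d j (tab (a # L)) S x = tab (todd j (a # L)) S x" for S x
  proof -
    have "odd_d j (tab (a # L)) S x = (if j \<notin> S then eps j S * ((if insert j S = T then m x else 0) + tab L (insert j S) x) else 0)"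
      using assms by (simp add: odd_d_eps tab_cons a)
    also have "\<dots> = (if j \<notin> S \<and> insert j S = T then eps j S * m x else 0) + odd_d j (tab L) S x"
      using assms by (auto simp: odd_d_eps algebra_simps)
    also have "\<dots> = (if j \<in> T \<and> S = T - {j} then eps j T * m x else 0) + tab (todd j L) S x"
    proof -
      have "(j \<notin> S \<and> insert j S = T) = (j \<in> T \<and> S = T - {j})" by auto
      moreover have "j \<notin> S \<and> insert j S = T \<Longrightarrow> eps j S = eps j T" using eps_insert_self by metis
      ultimately show ?thesis using Cons by auto
    qed
    finally show ?thesis by (cases "j \<in> T") (simp_all add: a tab_cons tab_append tab_nil)
  qed
  then show ?case by (auto simp: fun_eq_iff)
qed

lemma dcoord_tab: "k < 12 \<Longrightarrow> \<forall>(T, m)\<in>set L. hol m \<Longrightarrow>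
   dcoord k (tab L) = (if k < 6 then tab (tpd k L) else tab (todd (k - 6) L))"
  by (simp add: dcoord_def even_d_tab odd_d_tab)

lemma eps_empty[simp]: "eps j {} = 1" by (simp add: eps_def)
lemma eps_insert: "finite B \<Longrightarrow> eps a (insert b B) = (if b < a \<and> b \<notin> B then -1 else 1) * eps a B"
proof -
  assume fB: "finite B"
  show ?thesis
  proof (cases "b \<in> B")
    case True then show ?thesis by (simp add: insert_absorb)
  next
    case False
    have "{s \<in> insert b B. s < a} = (if b < a then insert b {s \<in> B. s < a} else {s \<in> B. s < a})" by auto
    then show ?thesis using False fB by (simp add: eps_def)
  qed
qed

lemma sgn2_insert: "finite A \<Longrightarrow> finite B \<Longrightarrow> a \<notin> A \<Longrightarrow> sgn2 (insert a A) B = sgn2 A B * eps a B"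
  by (rule sgn2_ins_l)

definition tev :: "(nat set \<times> (pt \<Rightarrow> complex)) list \<Rightarrow> nat set \<Rightarrow> pt \<Rightarrow> complex" where
  "tev L T x = (\<Sum>(U, m)\<leftarrow>L. if T = U then m x else 0)"

lemma tev_simps[simp]: "tev [] T x = 0" "tev ((U, m) # L) T x = (if T = U then m x else 0) + tev L T x"
  by (simp_all add: tev_def)

lemma tab_eq:
  assumes "\<forall>T\<in>set (map fst L1 @ map fst L2). \<forall>x. tev L1 T x = tev L2 T x"
  shows "tab L1 = tab L2"
proof (intro ext)
  fix S x
  show "tab L1 S x = tab L2 S x"
  proof (cases "S \<in> set (map fst L1 @ map fst L2)")
    case True then show ?thesis using assms by (simp add: tab_def tev_def)
  next
    case False
    have z: "tab L S x = 0" if "S \<notin> set (map fst L)" for L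
      using that
    proof (induction L)
      case Nil then show ?case by (simp add: tab_def)
    next
      case (Cons a L)
      obtain U n where a: "a = (U, n)" by force
      have "S \<noteq> U" using Cons.prems a by auto
      then show ?case using Cons a by (simp add: tab_cons)
    qed
    show ?thesis using False z[of L1] z[of L2] by simp
  qed
qed

lemma SF_tab: "\<forall>(T, m)\<in>set L. T \<subseteq> {..<6} \<and> hol m \<Longrightarrow> tab L \<in> SF"
proof (induction L)
  case Nil then show ?case by (simp add: tab_nil)
next
  case (Cons a L)
  obtain T m where a: "a = (T, m)" by force
  have "(\<lambda>S x. if S = T then m x else 0) \<in> SF"
  proof -
    have "hol (\<lambda>x. if S = T then m x else 0)" for S using Cons.prems a by (auto intro: hol_if)
    moreover have "(\<lambda>x. if S = T then m x else 0) = (\<lambda>_. 0)" if "\<not> S \<subseteq> {..<6}" for S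
    proof -
      have "S \<noteq> T" using that Cons.prems a by auto
      then show ?thesis by simp
    qed
    ultimately show ?thesis by (auto simp: SF_iff supp_def)
  qed
  then show ?case using Cons by (simp add: a tab_cons SF_add)
qed

lemma hom_tab: "\<forall>(T, m)\<in>set L. even (card T + p) \<Longrightarrow> hom p (tab L)"
proof (induction L)
  case Nil then show ?case by (simp add: tab_nil)
next
  case (Cons a L)
  obtain T m where a: "a = (T, m)" by force
  have "hom p (\<lambda>S x. if S = T then m x else 0)" using Cons.prems a by (auto simp: hom_def fun_eq_iff)
  then show ?case using Cons by (simp add: a tab_cons hom_add)
qed



lemma vfl_nil: "vfl [] k = tab []" by (simp add: vfl_def tab_def)
lemma vfl_cons: "vfl ((c, j) # l) k = (if j = k then sadd c (vfl l k) else vfl l k)"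
  by (simp add: vfl_def sadd_def)

lemma vapply_vfl_nil: "vapply (vfl []) g = tab []"
  by (simp add: vapply_def vfl_def tab_def)

lemma vapply_delta: "j < 12 \<Longrightarrow> vapply (\<lambda>k S x. if j = k then c S x else 0) g = smult c (dcoord j g)"
proof -
  assume j: "j < 12"
  have t: "smult (\<lambda>S x. if j = k then c S x else 0) (dcoord k g) S x = (if j = k then smult c (dcoord j g) S x else 0)"
    for k S x by (cases "j = k") auto
  show ?thesis using j by (simp add: vapply_def t)
qed

lemma vapply_vfl_cons: "j < 12 \<Longrightarrow> vapply (vfl ((c, j) # l)) g = sadd (smult c (dcoord j g)) (vapply (vfl l) g)"
proof -
  assume j: "j < 12"
  have "vfl ((c, j) # l) = (\<lambda>k S x. (if j = k then c S x else 0) + vfl l k S x)"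
    by (simp add: vfl_def fun_eq_iff)
  then show ?thesis using j by (simp add: vapply_fadd vapply_delta sadd_def)
qed

lemma hol_div[simp]: "hol f \<Longrightarrow> hol (\<lambda>x. f x / c)"
  using hol_cmult[of f "1 / c"] by simp
lemma hol_uminus[simp]: "hol f \<Longrightarrow> hol (\<lambda>x. - f x)"
  using hol_cmult[of f "-1"] by simp
lemma hol_mult'[simp]: "hol f \<Longrightarrow> hol g \<Longrightarrow> hol (\<lambda>x. f x * g x)" by (rule hol_mult)
lemma hol_add'[simp]: "hol f \<Longrightarrow> hol g \<Longrightarrow> hol (\<lambda>x. f x + g x)" by (rule hol_add)
lemma hol_diff'[simp]: "hol f \<Longrightarrow> hol g \<Longrightarrow> hol (\<lambda>x. f x - g x)" by (rule hol_minus)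
lemma hol_coord'[simp]: "j < 6 \<Longrightarrow> hol (\<lambda>x. x j)" by (rule hol_coord)

lemma pd_div[simp]: "hol f \<Longrightarrow> pd i (\<lambda>x. f x / c) = (\<lambda>x. pd i f x / c)"
  using hol_pd_cmult[of f i "1 / c"] by simp
lemma pd_uminus[simp]: "hol f \<Longrightarrow> pd i (\<lambda>x. - f x) = (\<lambda>x. - pd i f x)"
  using hol_pd_cmult[of f i "-1"] by simp
lemma pd_mult'[simp]: "hol f \<Longrightarrow> hol g \<Longrightarrow> pd i (\<lambda>x. f x * g x) = (\<lambda>x. pd i f x * g x + f x * pd i g x)"
  by (rule hol_pd_mult)
lemma pd_add'[simp]: "hol f \<Longrightarrow> hol g \<Longrightarrow> pd i (\<lambda>x. f x + g x) = (\<lambda>x. pd i f x + pd i g x)"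
  by (rule hol_pd_add)
lemma pd_diff'[simp]: "hol f \<Longrightarrow> hol g \<Longrightarrow> pd i (\<lambda>x. f x - g x) = (\<lambda>x. pd i f x - pd i g x)"
  by (intro ext) (simp add: pd_def dif_at hol_dif)
lemma pd_coord'[simp]: "pd i (\<lambda>x. x j) = (\<lambda>x. if i = j then 1 else 0)" by (rule pd_coord)

lemma smult_tab': "smult (tab L1) (tab L2) = tab (tmul L1 L2)" if "\<forall>(T, m)\<in>set L1. finite T" "\<forall>(U, n)\<in>set L2. finite U"
  using smult_tab that by blast

lemma dcoord_tab': "dcoord k (tab L) = (if k < 6 then tab (tpd k L) else tab (todd (k - 6) L))"
  if "k < 12" "\<forall>(T, m)\<in>set L. hol m"
  using dcoord_tab that by blast

definition ssub :: "sfun \<Rightarrow> sfun \<Rightarrow> sfun" where "ssub F G = (\<lambda>S x. F S x - G S x)"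
lemma to_ssub: "(\<lambda>S x. F S x - G S x) = ssub F G" by (simp add: ssub_def)
lemma to_sadd: "(\<lambda>S x. F S x + G S x) = sadd F G" by (simp add: sadd_def)
lemma to_sscale: "(\<lambda>S x. c * F S x) = sscale c F" by (simp add: sscale_def)
lemma ssub_tab: "ssub (tab L1) (tab L2) = tab (L1 @ tscale (-1) L2)"
  by (simp add: ssub_def tab_diff)

lemmas ev = sconst_tab ecoord_tab ocoord_tab sadd_tab sscale_tab ssub_tab to_ssub to_sadd to_sscale
  vfl_nil vfl_cons sgn2_insert eps_insert Int_insert_left insert_Diff_if
  smult_tab' dcoord_tab' vapply_vfl_nil vapply_vfl_cons todd_simps tpd_simps

definition fr :: "nat list" where "fr = [0, 1, 5, 6, 7, 10, 11]"
definition par :: "nat list" where "par = [0, 0, 0, 1, 1, 1, 1]"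
definition hg :: "nat \<Rightarrow> vf" where "hg i = Hgens ! i"

lemma Cfield_ssub: "Cfield k = ssub (ssub (ssub (Dx k) (smult c_lam (Dy k))) (smult c_th (Dnu k))) (smult c_ph (Dtau k))"
  by (simp add: Cfield_def ssub_def)

lemma hbr_ssub: "hbr p q A B k = ssub (vapply A (B k)) (sscale ((-1) ^ (p * q)) (vapply B (A k)))"
  by (simp add: hbr_def ssub_def sscale_def)

lemma sum7: "(\<lambda>S x. \<Sum>i<(7::nat). F i S x) = sadd (F 0) (sadd (F 1) (sadd (F 2) (sadd (F 3) (sadd (F 4) (sadd (F 5) (F 6))))))"
  by (simp add: sadd_def numeral_eq_Suc add.assoc)

lemma lt7: "(i::nat) < 7 \<longleftrightarrow> i = 0 \<or> i = 1 \<or> i = 2 \<or> i = 3 \<or> i = 4 \<or> i = 5 \<or> i = 6" by arith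
lemma lt12: "(i::nat) < 12 \<longleftrightarrow> i = 0 \<or> i = 1 \<or> i = 2 \<or> i = 3 \<or> i = 4 \<or> i = 5 \<or> i = 6
   \<or> i = 7 \<or> i = 8 \<or> i = 9 \<or> i = 10 \<or> i = 11" by arith

lemma vfl_out: "\<forall>(c, j)\<in>set l. j \<noteq> k \<Longrightarrow> vfl l k = (\<lambda>S x. 0)"
  unfolding vfl_def by (induction l) auto

lemma Cfield_hi: "12 \<le> k \<Longrightarrow> Cfield k = (\<lambda>S x. 0)"
  by (simp add: Cfield_def Dx_def Dy_def Dnu_def Dtau_def vfl_out)

lemma Cfield_vfl: "Cfield = vfl [(Cfield 0, 0), (Cfield 1, 1), (Cfield 2, 2), (Cfield 3, 3), (Cfield 4, 4),
   (Cfield 5, 5), (Cfield 6, 6), (Cfield 7, 7), (Cfield 8, 8), (Cfield 9, 9), (Cfield 10, 10), (Cfield 11, 11)]"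
proof (rule ext)
  fix k show "Cfield k = vfl [(Cfield 0, 0), (Cfield 1, 1), (Cfield 2, 2), (Cfield 3, 3), (Cfield 4, 4),
   (Cfield 5, 5), (Cfield 6, 6), (Cfield 7, 7), (Cfield 8, 8), (Cfield 9, 9), (Cfield 10, 10), (Cfield 11, 11)] k"
  proof (cases "k < 12")
    case True then show ?thesis unfolding lt12 by (elim disjE) (simp_all add: vfl_def)
  next
    case False then show ?thesis by (simp add: Cfield_hi vfl_out)
  qed
qed

lemma vapply_C: "vapply Cfield g = vapply (vfl [(Cfield 0, 0), (Cfield 1, 1), (Cfield 2, 2), (Cfield 3, 3), (Cfield 4, 4),
   (Cfield 5, 5), (Cfield 6, 6), (Cfield 7, 7), (Cfield 8, 8), (Cfield 9, 9), (Cfield 10, 10), (Cfield 11, 11)]) g"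
  by (subst Cfield_vfl) (rule refl)

definition dlt :: "vf \<Rightarrow> nat \<Rightarrow> sfun" where
  "dlt V m = ssub (V m) (\<lambda>S x. \<Sum>i<7. smult (V (fr ! i)) (hg i m) S x)"


definition DxT :: vf where
  "DxT = vfl [(tab [({}, \<lambda>x. 1)], 0), (tab [({}, \<lambda>x. x 3)], 2), (tab [({}, \<lambda>x. 1 / 3 * (x 5 * x 5 * x 5)), ({4, 5}, \<lambda>x. 2 * (x 5))], 3), (tab [({}, \<lambda>x. 1 / 2 * (x 5 * x 5)), ({4, 5}, \<lambda>x. 1)], 4), (tab [({5}, \<lambda>x. x 5)], 8), (tab [({4}, \<lambda>x. - (x 5))], 9)]"

definition DyT :: vf where
  "DyT = vfl [(tab [({}, \<lambda>x. 1)], 1), (tab [({}, \<lambda>x. x 4)], 2), (tab [({}, \<lambda>x. 1 / 2 * (x 5 * x 5)), ({4, 5}, \<lambda>x. 1)], 3), (tab [({}, \<lambda>x. x 5)], 4), (tab [({5}, \<lambda>x. 1)], 8), (tab [({4}, \<lambda>x. - 1)], 9)]"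

definition DlT :: vf where
  "DlT = vfl [(tab [({}, \<lambda>x. 1)], 5)]"

definition DnuT :: vf where
  "DnuT = vfl [(tab [({2}, \<lambda>x. 1)], 2), (tab [({5}, \<lambda>x. x 5)], 3), (tab [({5}, \<lambda>x. 1)], 4), (tab [({}, \<lambda>x. 1)], 6), (tab [({}, \<lambda>x. - (x 5))], 9)]"

definition DtauT :: vf where
  "DtauT = vfl [(tab [({3}, \<lambda>x. 1)], 2), (tab [({4}, \<lambda>x. - (x 5))], 3), (tab [({4}, \<lambda>x. - 1)], 4), (tab [({}, \<lambda>x. 1)], 7), (tab [({}, \<lambda>x. x 5)], 8)]"

definition DthT :: vf where
  "DthT = vfl [(tab [({}, \<lambda>x. 1)], 10)]"

definition DphT :: vf where
  "DphT = vfl [(tab [({}, \<lambda>x. 1)], 11)]"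

definition CT :: vf where
  "CT = vfl [(tab [({}, \<lambda>x. 1)], 0), (tab [({}, \<lambda>x. - (x 5))], 1), (tab [({}, \<lambda>x. - (x 4 * x 5) + x 3), ({2, 4}, \<lambda>x. 1), ({3, 5}, \<lambda>x. 1)], 2), (tab [({}, \<lambda>x. - (1 / 6 * (x 5 * x 5 * x 5))), ({4, 5}, \<lambda>x. - (x 5))], 3), (tab [({}, \<lambda>x. - (1 / 2 * (x 5 * x 5))), ({4, 5}, \<lambda>x. - 1)], 4), (tab [({4}, \<lambda>x. - 1)], 6), (tab [({5}, \<lambda>x. - 1)], 7), (tab [({5}, \<lambda>x. - (x 5))], 8), (tab [({4}, \<lambda>x. x 5)], 9)]"


lemma lit_set_eq: "((A::nat set) = B) \<longleftrightarrow> (\<forall>i\<in>A. i \<in> B) \<and> (\<forall>i\<in>B. i \<in> A)"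
  by auto

lemma vfl_eq:
  assumes "\<And>k. k < 12 \<Longrightarrow> vfl l1 k = vfl l2 k" "\<forall>(c, j)\<in>set l1. j < 12" "\<forall>(c, j)\<in>set l2. j < 12"
  shows "vfl l1 = vfl l2"
proof (rule ext)
  fix k show "vfl l1 k = vfl l2 k"
  proof (cases "k < 12")
    case True then show ?thesis using assms by simp
  next
    case False
    then have "\<forall>(c, j)\<in>set l1. j \<noteq> k" "\<forall>(c, j)\<in>set l2. j \<noteq> k" using assms(2,3) by auto
    then show ?thesis by (simp add: vfl_out)
  qed
qed

lemma vfl_eqI: "(\<And>k. k < 12 \<Longrightarrow> vfl l1 k = vfl l2 k) \<Longrightarrow> \<forall>(c, j)\<in>set l1. j < 12 \<Longrightarrow>
   \<forall>(c, j)\<in>set l2. j < 12 \<Longrightarrow> vfl l1 = vfl l2"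
  using vfl_eq by blast

lemma hgT0: "hg 0 = DxT"
  unfolding hg_def Hgens_def DxT_def Dx_def
  apply simp
  apply (rule vfl_eqI)
    apply (simp only: lt12)
    apply (elim disjE; simp add: ev; ((rule tab_eq), (simp only: list.map list.set append.simps fst_conv ball_simps tev_simps), (simp only: lit_set_eq ball_simps insert_iff empty_iff), simp add: algebra_simps)?)
   apply simp
  apply simp
  done

lemma hgT1: "hg 1 = DyT"
  unfolding hg_def Hgens_def DyT_def Dy_def
  apply simp
  apply (rule vfl_eqI)
    apply (simp only: lt12)
    apply (elim disjE; simp add: ev; ((rule tab_eq), (simp only: list.map list.set append.simps fst_conv ball_simps tev_simps), (simp only: lit_set_eq ball_simps insert_iff empty_iff), simp add: algebra_simps)?)
   apply simp
  apply simp
  done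

lemma hgT2: "hg 2 = DlT"
  unfolding hg_def Hgens_def DlT_def
  apply simp
  apply (rule vfl_eqI)
    apply (simp only: lt12)
    apply (elim disjE; simp add: ev; ((rule tab_eq), (simp only: list.map list.set append.simps fst_conv ball_simps tev_simps), (simp only: lit_set_eq ball_simps insert_iff empty_iff), simp add: algebra_simps)?)
   apply simp
  apply simp
  done

lemma hgT3: "hg 3 = DnuT"
  unfolding hg_def Hgens_def DnuT_def Dnu_def
  apply simp
  apply (rule vfl_eqI)
    apply (simp only: lt12)
    apply (elim disjE; simp add: ev; ((rule tab_eq), (simp only: list.map list.set append.simps fst_conv ball_simps tev_simps), (simp only: lit_set_eq ball_simps insert_iff empty_iff), simp add: algebra_simps)?)
   apply simp
  apply simp
  done

lemma hgT4: "hg 4 = DtauT"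
  unfolding hg_def Hgens_def DtauT_def Dtau_def
  apply simp
  apply (rule vfl_eqI)
    apply (simp only: lt12)
    apply (elim disjE; simp add: ev; ((rule tab_eq), (simp only: list.map list.set append.simps fst_conv ball_simps tev_simps), (simp only: lit_set_eq ball_simps insert_iff empty_iff), simp add: algebra_simps)?)
   apply simp
  apply simp
  done

lemma hgT5: "hg 5 = DthT"
  unfolding hg_def Hgens_def DthT_def
  apply simp
  apply (rule vfl_eqI)
    apply (simp only: lt12)
    apply (elim disjE; simp add: ev; ((rule tab_eq), (simp only: list.map list.set append.simps fst_conv ball_simps tev_simps), (simp only: lit_set_eq ball_simps insert_iff empty_iff), simp add: algebra_simps)?)
   apply simp
  apply simp
  done

lemma hgT6: "hg 6 = DphT"
  unfolding hg_def Hgens_def DphT_def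
  apply simp
  apply (rule vfl_eqI)
    apply (simp only: lt12)
    apply (elim disjE; simp add: ev; ((rule tab_eq), (simp only: list.map list.set append.simps fst_conv ball_simps tev_simps), (simp only: lit_set_eq ball_simps insert_iff empty_iff), simp add: algebra_simps)?)
   apply simp
  apply simp
  done

lemma CT: "Cfield = CT"
  unfolding CT_def
  apply (subst Cfield_vfl)
  apply (rule vfl_eqI)
    apply (simp only: lt12)
    apply (elim disjE; simp add: ev Cfield_ssub Dx_def Dy_def Dnu_def Dtau_def; ((rule tab_eq), (simp only: list.map list.set append.simps fst_conv ball_simps tev_simps), (simp only: lit_set_eq ball_simps insert_iff empty_iff), simp add: algebra_simps)?)
   apply simp
  apply simp
  done

lemmas unf = DxT_def DyT_def DlT_def DnuT_def DtauT_def DthT_def DphT_def CT_def fr_def par_def hbr_ssub sum7 dlt_def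




lemma tab_zero_cons: "tab ((T, \<lambda>x. 0) # L) = tab L" by (simp add: tab_def)
lemma hgT1': "hg (Suc 0) = DyT" using hgT1 by simp
lemma zero_tab: "(\<lambda>S x. 0) = tab []" by (simp add: tab_def)

lemmas unf2 = DxT_def DyT_def DlT_def DnuT_def DtauT_def DthT_def DphT_def CT_def fr_def par_def hbr_ssub sum7 dlt_def
  hgT0 hgT1 hgT2 hgT3 hgT4 hgT5 hgT6 CT

definition dls :: "nat set" where "dls = {2, 3, 4, 8, 9}"

lemma K1: "i < 7 \<Longrightarrow> l < 7 \<Longrightarrow> hg i (fr ! l) = (if i = l then sconst 1 else (\<lambda>S x. 0))"
  unfolding lt7
  by (elim disjE; simp only: unf2; simp add: ev hgT1' tab_zero_cons zero_tab;
      ((rule tab_eq), (simp only: list.map list.set append.simps fst_conv ball_simps tev_simps),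
       (simp only: lit_set_eq ball_simps insert_iff empty_iff), simp add: algebra_simps)?)

lemma K2: "i < 7 \<Longrightarrow> 12 \<le> k \<Longrightarrow> hg i k = (\<lambda>S x. 0)"
  unfolding lt7
  by (elim disjE; simp add: unf2 hgT1' vfl_out)

lemma K4: "i < 7 \<Longrightarrow> m \<in> dls \<Longrightarrow> dlt (hg i) m = (\<lambda>S x. 0)"
  unfolding lt7 dls_def
  by (elim disjE; simp only: insert_iff empty_iff; elim disjE; simp only: unf2; simp add: ev hgT1' tab_zero_cons zero_tab;
      ((rule tab_eq), (simp only: list.map list.set append.simps fst_conv ball_simps tev_simps),
       (simp only: lit_set_eq ball_simps insert_iff empty_iff), simp add: algebra_simps)?)

lemma VF_vfl: "\<forall>(c, j)\<in>set l. c \<in> SF \<Longrightarrow> VF (vfl l)"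
proof (induction l)
  case Nil then show ?case by (simp add: VF_def vfl_def)
next
  case (Cons a l)
  obtain c j where a: "a = (c, j)" by force
  have "vfl (a # l) k = (\<lambda>S x. (if j = k then c S x else 0) + vfl l k S x)" for k
    by (simp add: vfl_def a)
  moreover have "(\<lambda>S x. if j = k then c S x else 0) \<in> SF" for k using Cons.prems a by (cases "j = k") auto
  ultimately show ?case using Cons a by (auto simp: VF_def intro!: SF_add)
qed

lemma hvf_vfl: "\<forall>(c, j)\<in>set l. hom (p + kp j) c \<Longrightarrow> hvf p (vfl l)"
proof (induction l)
  case Nil then show ?case by (simp add: hvf_def vfl_def)
next
  case (Cons a l)
  obtain c j where a: "a = (c, j)" by force
  have "vfl (a # l) k = (\<lambda>S x. (if j = k then c S x else 0) + vfl l k S x)" for k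
    by (simp add: vfl_def a)
  moreover have "hom (p + kp k) (\<lambda>S x. if j = k then c S x else 0)" for k using Cons.prems a by (cases "j = k") auto
  ultimately show ?case using Cons a by (auto simp: hvf_def intro!: hom_add)
qed

lemma K3: "i < 7 \<Longrightarrow> VF (hg i)" "i < 7 \<Longrightarrow> hvf (par ! i) (hg i)"
  unfolding lt7
  by (elim disjE; simp add: unf2 hgT1' par_def; (intro VF_vfl hvf_vfl); simp add: kp_def;
      (intro conjI SF_tab hom_tab); simp)+

lemma K5a: "VF Cfield" "hvf 0 Cfield"
  unfolding CT CT_def
  by ((intro VF_vfl hvf_vfl); simp add: kp_def; (intro conjI SF_tab hom_tab); simp)+

lemma K5b: "Cfield 0 = sconst 1" "Cfield 1 = sscale (-1) (ecoord 5)" "Cfield 5 = (\<lambda>S x. 0)"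
  "Cfield 6 = sscale (-1) (ocoord 4)" "Cfield 7 = sscale (-1) (ocoord 5)" "Cfield 10 = (\<lambda>S x. 0)"
  "Cfield 11 = (\<lambda>S x. 0)"
  by (simp only: unf2; simp add: ev hgT1' tab_zero_cons zero_tab;
      ((rule tab_eq), (simp only: list.map list.set append.simps fst_conv ball_simps tev_simps),
       (simp only: lit_set_eq ball_simps insert_iff empty_iff), simp add: algebra_simps)?)+

lemma K5c: "m \<in> dls \<Longrightarrow> dlt Cfield m = (\<lambda>S x. 0)"
  unfolding dls_def
  by (simp only: insert_iff empty_iff; elim disjE; simp only: unf2; simp add: ev hgT1' tab_zero_cons zero_tab;
      ((rule tab_eq), (simp only: list.map list.set append.simps fst_conv ball_simps tev_simps),
       (simp only: lit_set_eq ball_simps insert_iff empty_iff), simp add: algebra_simps)?)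

lemma K6: "i < 7 \<Longrightarrow> m \<in> dls \<Longrightarrow> dlt (hbr 0 (par ! i) Cfield (hg i)) m = (\<lambda>S x. 0)"
  unfolding lt7 dls_def
  by (elim disjE; simp only: insert_iff empty_iff; elim disjE; simp only: unf2; simp add: ev hgT1' tab_zero_cons zero_tab;
      ((rule tab_eq), (simp only: list.map list.set append.simps fst_conv ball_simps tev_simps),
       (simp only: lit_set_eq ball_simps insert_iff empty_iff), simp add: algebra_simps)?)



lemma K7a: "i < 7 \<Longrightarrow> dlt (hbr (par ! i) 0 (hg i) (hg 2)) 4 =
    (if i = 0 then sscale (-1) (ecoord 5) else if i = 1 then sconst (-1) else (\<lambda>S x. 0))"
  "i < 7 \<Longrightarrow> dlt (hbr (par ! i) 0 (hg i) (hg 2)) 8 =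
    (if i = 0 then sscale (-1) (ocoord 5) else if i = 4 then sconst (-1) else (\<lambda>S x. 0))"
  "i < 7 \<Longrightarrow> dlt (hbr (par ! i) 0 (hg i) (hg 2)) 9 =
    (if i = 0 then ocoord 4 else if i = 3 then sconst 1 else (\<lambda>S x. 0))"
  "i < 7 \<Longrightarrow> dlt (hbr (par ! i) 0 (hg i) (hg 1)) 4 =
    (if i = 2 then sconst 1 else (\<lambda>S x. 0))"
  "i < 7 \<Longrightarrow> dlt (hbr (par ! i) 0 (hg i) (hg 1)) 8 =
    (if i = 6 then sconst 1 else (\<lambda>S x. 0))"
  "i < 7 \<Longrightarrow> dlt (hbr (par ! i) 0 (hg i) (hg 1)) 9 =
    (if i = 5 then sconst (-1) else (\<lambda>S x. 0))"
  unfolding lt7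
  by (elim disjE; simp only: unf2; simp add: ev hgT1' tab_zero_cons zero_tab;
      ((rule tab_eq), (simp only: list.map list.set append.simps fst_conv ball_simps tev_simps),
       (simp only: lit_set_eq ball_simps insert_iff empty_iff), simp add: algebra_simps)?)+



definition inH :: "vf \<Rightarrow> bool" where
  "inH V \<longleftrightarrow> (\<forall>l<7. V (fr ! l) \<in> SF) \<and> (\<forall>k. 12 \<le> k \<longrightarrow> V k = (\<lambda>S x. 0)) \<and>
     (\<forall>m\<in>dls. dlt V m = (\<lambda>S x. 0))"

lemma sum7p: "(\<Sum>i<(7::nat). F i) = F 0 + F 1 + F 2 + F 3 + F 4 + F 5 + F 6"
  by (simp add: numeral_eq_Suc add.assoc)

lemma fr_nth: "fr ! 0 = 0" "fr ! 1 = 1" "fr ! Suc 0 = 1" "fr ! 2 = 5" "fr ! 3 = 6" "fr ! 4 = 7" "fr ! 5 = 10" "fr ! 6 = 11"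
  by (simp_all add: fr_def)

lemma dlt_zero_iff: "dlt V m = (\<lambda>S x. 0) \<longleftrightarrow> V m = (\<lambda>S x. \<Sum>i<7. smult (V (fr ! i)) (hg i m) S x)"
  by (auto simp: dlt_def ssub_def fun_eq_iff)

lemma sum_hg_fr:
  assumes "l < 7" "\<And>i. i < 7 \<Longrightarrow> supp (g i)"
  shows "(\<lambda>S x. \<Sum>i<7. smult (g i) (hg i (fr ! l)) S x) = g l"
proof -
  have "smult (g i) (hg i (fr ! l)) S x = (if i = l then g l S x else 0)" if "i < 7" for i S x
    using that assms K1[OF that assms(1)] smult_const_r[of "g l" 1] by auto
  then show ?thesis using assms(1) by (simp add: fun_eq_iff)
qed

lemma inH_rep: assumes "inH V" shows "V = (\<lambda>k S x. \<Sum>i<7. smult (V (fr ! i)) (hg i k) S x)"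
proof (rule ext)
  fix k
  have sV: "\<And>i. i < 7 \<Longrightarrow> supp (V (fr ! i))" using assms by (auto simp: inH_def SF_iff)
  show "V k = (\<lambda>S x. \<Sum>i<7. smult (V (fr ! i)) (hg i k) S x)"
  proof (cases "k < 12")
    case False
    then show ?thesis using assms K2 by (auto simp: inH_def)
  next
    case True
    have dl: "V m = (\<lambda>S x. \<Sum>i<7. smult (V (fr ! i)) (hg i m) S x)" if "m \<in> dls" for m
      using assms that by (simp add: inH_def dlt_zero_iff)
    have fr: "V (fr ! l) = (\<lambda>S x. \<Sum>i<7. smult (V (fr ! i)) (hg i (fr ! l)) S x)" if "l < 7" for l
      using sum_hg_fr[OF that sV] by simp
    show ?thesis using True unfolding lt12
      by (elim disjE) (use fr[of 0] fr[of 1] fr[of 2] fr[of 3] fr[of 4] fr[of 5] fr[of 6] dl in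
          \<open>simp_all add: fr_nth dls_def\<close>)
  qed
qed

lemma GammaH_iff: "V \<in> GammaH \<longleftrightarrow> inH V"
proof
  assume "V \<in> GammaH"
  then obtain f where f: "\<forall>i<7. f i \<in> SF" "V = (\<lambda>k S x. \<Sum>i<7. smult (f i) ((Hgens ! i) k) S x)"
    unfolding GammaH_def by blast
  have V: "V = (\<lambda>k S x. \<Sum>i<7. smult (f i) (hg i k) S x)" using f(2) by (simp add: hg_def)
  have vfr: "V (fr ! l) = f l" if "l < 7" for l
    using sum_hg_fr[OF that, of f] f(1) V by (simp add: SF_iff)
  show "inH V" unfolding inH_def
  proof (intro conjI allI impI ballI)
    fix l :: nat assume "l < 7" then show "V (fr ! l) \<in> SF" using vfr f(1) by simp
  next
    fix k :: nat assume "12 \<le> k" then show "V k = (\<lambda>S x. 0)" using V K2 by simp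
  next
    fix m assume "m \<in> dls"
    have "(\<lambda>S x. \<Sum>i<7. smult (V (fr ! i)) (hg i m) S x) = (\<lambda>S x. \<Sum>i<7. smult (f i) (hg i m) S x)"
      using vfr by simp
    then show "dlt V m = (\<lambda>S x. 0)" unfolding dlt_zero_iff using V by simp
  qed
next
  assume a: "inH V"
  show "V \<in> GammaH" unfolding GammaH_def
    using inH_rep[OF a] a by (auto simp: inH_def hg_def intro!: exI[of _ "\<lambda>i. V (fr ! i)"])
qed

lemma VF_inH: assumes "inH V" shows "VF V"
proof -
  have "V k \<in> SF" for k
    using assms K3(1) by (subst inH_rep[OF assms]) (auto simp: inH_def VF_def intro!: SF_sum SF_smult)
  then show ?thesis by (simp add: VF_def)
qed

lemma dlt_lin: assumes "finite I"
  shows "dlt (\<lambda>k S x. \<Sum>j\<in>I. smult (a j) (V j k) S x) m = (\<lambda>S x. \<Sum>j\<in>I. smult (a j) (dlt (V j) m) S x)"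
proof -
  have "smult (a j) (dlt (V j) m) = (\<lambda>S x. smult (a j) (V j m) S x -
      (\<Sum>i<7. smult (smult (a j) (V j (fr ! i))) (hg i m) S x))" for j
    by (simp add: dlt_def ssub_def smult_diff_r smult_sum_r smult_assoc)
  then show ?thesis
    by (simp add: dlt_def ssub_def smult_sum_l sum_subtractf) (simp add: fun_eq_iff sum.swap[of _ I])
qed

lemma inH_lin:
  assumes "inH V" "inH W" "a \<in> SF" "b \<in> SF"
  shows "inH (\<lambda>k S x. smult a (V k) S x + c * smult b (W k) S x)"
proof -
  let ?U = "\<lambda>k S x. smult a (V k) S x + c * smult b (W k) S x"
  have U: "?U = (\<lambda>k S x. \<Sum>j\<in>{0::nat, 1}. smult (if j = 0 then a else (\<lambda>S x. c * b S x)) (if j = 0 then V k else W k) S x)"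
    by (simp add: smult_cmult_l)
  have "dlt ?U m = (\<lambda>S x. \<Sum>j\<in>{0::nat, 1}. smult (if j = 0 then a else (\<lambda>S x. c * b S x)) (dlt (if j = 0 then V else W) m) S x)" for m
    unfolding U using dlt_lin[of "{0::nat, 1}" "\<lambda>j. if j = 0 then a else (\<lambda>S x. c * b S x)" "\<lambda>j. if j = 0 then V else W" m]
    by (simp add: if_distrib)
  then have "dlt ?U m = (\<lambda>S x. 0)" if "m \<in> dls" for m
    using assms that by (simp add: inH_def)
  moreover have "?U (fr ! l) \<in> SF" if "l < 7" for l
    using assms that by (auto simp: inH_def intro!: SF_add SF_cmult SF_smult)
  moreover have "?U k = (\<lambda>S x. 0)" if "12 \<le> k" for k
    using assms that by (simp add: inH_def)
  ultimately show ?thesis by (simp add: inH_def)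
qed

lemma inH_hg: "i < 7 \<Longrightarrow> inH (hg i)"
  unfolding inH_def using K1 K2 K4 by auto

lemma inH_C: "inH Cfield"
  unfolding inH_def using K5a(1) K5c Cfield_hi by (auto simp: VF_def)

lemma inH_zero: "inH (\<lambda>k S x. 0)"
  by (simp add: inH_def dlt_def ssub_def)

lemma inH_scale: "inH V \<Longrightarrow> a \<in> SF \<Longrightarrow> inH (vscale a V)"
  using inH_lin[of V "\<lambda>k S x. 0" a "sconst 0" 0] inH_zero by (simp add: vscale_def)

lemma inH_add: "inH V \<Longrightarrow> inH W \<Longrightarrow> inH (\<lambda>k S x. V k S x + W k S x)"
proof -
  assume a: "inH V" "inH W"
  have sV: "supp (V k)" "supp (W k)" for k using VF_inH[OF a(1)] VF_inH[OF a(2)] by (auto simp: VF_def SF_iff)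
  show ?thesis using inH_lin[OF a SF_sconst SF_sconst, of 1 1 1] by (simp add: smult_const_l sV)
qed

lemma inH_sum: "finite I \<Longrightarrow> (\<And>i. i \<in> I \<Longrightarrow> inH (V i)) \<Longrightarrow> inH (\<lambda>k S x. \<Sum>i\<in>I. V i k S x)"
proof (induction I rule: finite_induct)
  case empty then show ?case by (simp add: inH_zero)
next
  case (insert a I)
  then show ?case using inH_add[of "V a" "\<lambda>k S x. \<Sum>i\<in>I. V i k S x"] by simp
qed



lemma smult_sproj_sum: "(\<Sum>t<2. smult (sproj t g) H S x) = smult g H S x"
proof -
  have "smult g H = smult (\<lambda>S x. sproj 0 g S x + sproj 1 g S x) H" by (subst sproj_decomp) (rule refl)
  then show ?thesis by (simp add: sum2 smult_add_l)
qed

lemma sum_prod2: "(\<Sum>p\<in>A \<times> B. F (fst p) (snd p)) = (\<Sum>i\<in>A. \<Sum>t\<in>B. F i t)"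
  by (subst sum.cartesian_product) (simp add: split_def)

lemma decomp_field:
  shows "(\<lambda>k S x. \<Sum>i\<in>I. smult (g i) (H i k) S x) =
    (\<lambda>k S x. \<Sum>p\<in>I \<times> {..<2}. vscale (sproj (snd p) (g (fst p))) (H (fst p)) k S x)"
  unfolding vscale_def sum_prod2[where F = "\<lambda>i t. smult (sproj t (g i)) (H i _) _ _"]
  by (simp add: smult_sproj_sum)

lemma recomb:
  shows "(\<Sum>p\<in>I \<times> {..<2}. smult (sproj (snd p) (g (fst p))) (H (fst p)) S x) = (\<Sum>i\<in>I. smult (g i) (H i) S x)"
  by (simp add: sum_prod2[where F = "\<lambda>i t. smult (sproj t (g i)) (H i) S x"] smult_sproj_sum)

lemma hvf_mod: assumes "hvf n X" shows "hvf (n mod 2) X"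
  unfolding hvf_def
proof
  fix k
  have "even (n mod 2 + kp k) = even (n + kp k)" by presburger
  moreover have "hom (n + kp k) (X k)" using assms by (simp add: hvf_def)
  ultimately show "hom (n mod 2 + kp k) (X k)" using hom_par[of "n mod 2 + kp k" "n + kp k" "X k"] by simp
qed

lemma vapply_zero_field_comp: "vapply X (\<lambda>S x. 0) = (\<lambda>S x. 0)" by simp

lemma inH_K: assumes "i < 7" shows "inH (hbr 0 (par ! i) Cfield (hg i))"
  unfolding inH_def
proof (intro conjI allI impI ballI)
  fix l :: nat assume "l < 7"
  show "hbr 0 (par ! i) Cfield (hg i) (fr ! l) \<in> SF"
    unfolding hbr_def using K5a(1) K3(1)[OF assms]
    by (intro SF_diff SF_cmult SF_vapply) (auto simp: VF_def)
next
  fix k :: nat assume "12 \<le> k"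
  then show "hbr 0 (par ! i) Cfield (hg i) k = (\<lambda>S x. 0)"
    using K2[OF assms] Cfield_hi by (simp add: hbr_def)
next
  fix m assume "m \<in> dls" then show "dlt (hbr 0 (par ! i) Cfield (hg i)) m = (\<lambda>S x. 0)"
    using K6 assms by blast
qed

lemma term_sup:
  assumes s: "s < 2" and t: "t < 2" and i: "i < 7" and f: "f \<in> SF" and g: "g \<in> SF"
  shows "inH (sbr (vscale (sproj s f) Cfield) (vscale (sproj t g) (hg i)))"
proof -
  let ?fs = "sproj s f" and ?gt = "sproj t g"
  let ?A = "vscale ?fs Cfield"
  have fs: "?fs \<in> SF" "hom s ?fs" using f s by (auto simp: SF_sproj hom_sproj)
  have gt: "?gt \<in> SF" "hom t ?gt" using g t by (auto simp: SF_sproj hom_sproj)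
  have hA: "hvf s ?A" using hvf_vscale[OF K5a(2) fs(2)] by simp
  have VA: "VF ?A" using VF_vscale[OF fs(1) K5a(1)] .
  have hB: "hvf ((t + par ! i) mod 2) (vscale ?gt (hg i))"
    using hvf_mod[OF hvf_vscale[OF K3(2)[OF i] gt(2)]] .
  have e1: "sbr ?A (vscale ?gt (hg i)) = hbr s ((t + par ! i) mod 2) ?A (vscale ?gt (hg i))"
    by (rule sbr_hom[OF hA hB s]) simp
  have e2: "hbr s ((t + par ! i) mod 2) ?A (vscale ?gt (hg i)) =
     (\<lambda>k S x. smult (vapply ?A ?gt) (hg i k) S x + (-1::complex) ^ (s * t) * smult ?gt (hbr s (par ! i) ?A (hg i) k) S x)"
    by (rule hbr_scale_r[OF hA K3(2)[OF i] VA K3(1)[OF i] gt]) (simp add: even_add)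
  have e3: "hbr s (par ! i) ?A (hg i) =
     (\<lambda>k S x. smult ?fs (hbr 0 (par ! i) Cfield (hg i) k) S x - (-1::complex) ^ (s * par ! i) * smult (vapply (hg i) ?fs) (Cfield k) S x)"
    by (rule hbr_scale_l[OF K5a(2) K3(2)[OF i] K5a(1) K3(1)[OF i] fs]) simp
  have "inH (hbr s (par ! i) ?A (hg i))"
    unfolding e3 using inH_lin[OF inH_K[OF i] inH_C fs(1) SF_vapply[OF K3(1)[OF i] fs(1)], of "- ((-1::complex) ^ (s * par ! i))"]
    by simp
  then show ?thesis unfolding e1 e2
    by (rule inH_lin[OF inH_hg[OF i] _ SF_vapply[OF VA gt(1)] gt(1)])
qed

lemma levi:
  assumes X: "inH X" and j: "j = 1 \<or> j = 2" and br: "inH (sbr X (hg j))" and m: "m \<in> dls"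
  shows "(\<lambda>S x. \<Sum>i<7. smult (X (fr ! i)) (dlt (hbr (par ! i) 0 (hg i) (hg j)) m) S x) = (\<lambda>S x. 0)"
proof -
  define f where "f i = X (fr ! i)" for i
  define P where "P = {..<(7::nat)} \<times> {..<(2::nat)}"
  define A where "A p = vscale (sproj (snd p) (f (fst p))) (hg (fst p))" for p
  define K where "K i = hbr (par ! i) 0 (hg i) (hg j)" for i
  have fP: "finite P" by (simp add: P_def)
  have fSF: "i < 7 \<Longrightarrow> f i \<in> SF" for i using X by (simp add: inH_def f_def)
  have j7: "j < 7" "par ! j = 0" using j by (auto simp: par_def)
  have hj: "hvf 0 (hg j)" "VF (hg j)" using K3[OF j7(1)] j7(2) by auto
  have pP: "fst p < 7" "snd p < 2" if "p \<in> P" for p using that by (auto simp: P_def)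
  have ft: "sproj (snd p) (f (fst p)) \<in> SF" "hom (snd p) (sproj (snd p) (f (fst p)))" if "p \<in> P" for p
    using pP[OF that] fSF by (auto simp: SF_sproj hom_sproj)
  have VA: "VF (A p)" if "p \<in> P" for p
    unfolding A_def using ft(1)[OF that] K3(1)[OF pP(1)[OF that]] by (rule VF_vscale)
  have Xd: "X = (\<lambda>k S x. \<Sum>p\<in>P. A p k S x)"
    unfolding A_def P_def f_def by (subst inH_rep[OF X]) (rule decomp_field)
  have sA: "sbr (A p) (hg j) = (\<lambda>k S x. smult (sproj (snd p) (f (fst p))) (K (fst p) k) S x
          - smult (vapply (hg j) (sproj (snd p) (f (fst p)))) (hg (fst p) k) S x)" if "p \<in> P" for p
  proof -
    have hA: "hvf ((snd p + par ! fst p) mod 2) (A p)"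
      unfolding A_def using hvf_mod[OF hvf_vscale[OF K3(2)[OF pP(1)[OF that]] ft(2)[OF that]]] .
    have "sbr (A p) (hg j) = hbr ((snd p + par ! fst p) mod 2) 0 (A p) (hg j)"
      by (rule sbr_hom[OF hA hj(1)]) simp_all
    also have "\<dots> = (\<lambda>k S x. smult (sproj (snd p) (f (fst p))) (K (fst p) k) S x
          - (-1::complex) ^ (((snd p + par ! fst p) mod 2) * 0) * smult (vapply (hg j) (sproj (snd p) (f (fst p)))) (hg (fst p) k) S x)"
      unfolding A_def K_def
      by (rule hbr_scale_l[OF K3(2)[OF pP(1)[OF that]] hj(1) K3(1)[OF pP(1)[OF that]] hj(2) ft[OF that]])
         (simp add: even_add)
    finally show ?thesis by simp
  qed
  define Z where "Z = (\<lambda>k S x. \<Sum>p\<in>P. smult (vapply (hg j) (sproj (snd p) (f (fst p)))) (hg (fst p) k) S x)"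
  define W where "W = (\<lambda>k S x. \<Sum>p\<in>P. smult (sproj (snd p) (f (fst p))) (K (fst p) k) S x)"
  have "sbr X (hg j) = (\<lambda>k S x. \<Sum>p\<in>P. sbr (A p) (hg j) k S x)"
    unfolding Xd using fP VA by (rule sbr_sum_l)
  also have "\<dots> = (\<lambda>k S x. W k S x - Z k S x)"
    by (simp add: sA W_def Z_def sum_subtractf cong: sum.cong)
  finally have sb: "sbr X (hg j) = (\<lambda>k S x. W k S x - Z k S x)" .
  have iZ: "inH Z"
    unfolding Z_def using fP
    by (intro inH_sum) (auto intro!: inH_scale[unfolded vscale_def] inH_hg pP SF_vapply hj(2) ft)
  have "W = (\<lambda>k S x. sbr X (hg j) k S x + Z k S x)" unfolding sb by simp
  then have iW: "inH W" using inH_add[OF br iZ] by simp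
  have "dlt W m = (\<lambda>S x. \<Sum>p\<in>P. smult (sproj (snd p) (f (fst p))) (dlt (K (fst p)) m) S x)"
    unfolding W_def by (rule dlt_lin[OF fP])
  also have "\<dots> = (\<lambda>S x. \<Sum>i<7. smult (f i) (dlt (K i) m) S x)"
    unfolding P_def using recomb[where I = "{..<7}" and g = f and H = "\<lambda>i. dlt (K i) m"] by simp
  finally show ?thesis using iW m by (simp add: inH_def f_def K_def)
qed

lemma eq_from_levi:
  assumes X: "inH X" and j: "j = 1 \<or> j = 2" and br: "inH (sbr X (hg j))" and m: "m \<in> dls"
  shows "(\<Sum>i<7. smult (X (fr ! i)) (dlt (hbr (par ! i) 0 (hg i) (hg j)) m) S x) = 0"
  using levi[OF X j br m] by (simp add: fun_eq_iff)

theorem proposition4p12: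
  shows "ChH = {vscale f Cfield | f. f \<in> SF}"
proof (intro equalityI subsetI)
  fix X assume "X \<in> {vscale f Cfield | f. f \<in> SF}"
  then obtain f where f: "f \<in> SF" and X: "X = vscale f Cfield" by blast
  have iX: "inH X" using inH_scale[OF inH_C f] X by simp
  have "\<forall>Y\<in>GammaH. sbr X Y \<in> GammaH"
  proof
    fix Y assume "Y \<in> GammaH"
    then obtain g where g: "\<forall>i<7. g i \<in> SF" "Y = (\<lambda>k S x. \<Sum>i<7. smult (g i) ((Hgens ! i) k) S x)"
      unfolding GammaH_def by blast
    define P where "P = {..<(7::nat)} \<times> {..<(2::nat)}"
    define B where "B p = vscale (sproj (snd p) (g (fst p))) (hg (fst p))" for p
    define A where "A s = vscale (sproj s f) Cfield" for s
    have fP: "finite P" by (simp add: P_def)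
    have pP: "fst p < 7" "snd p < 2" if "p \<in> P" for p using that by (auto simp: P_def)
    have Yd: "Y = (\<lambda>k S x. \<Sum>p\<in>P. B p k S x)"
      unfolding g(2) B_def P_def hg_def[symmetric] by (rule decomp_field)
    have Xd: "X = (\<lambda>k S x. \<Sum>s<2. A s k S x)"
      unfolding X A_def vscale_def by (simp add: smult_sproj_sum)
    have VA: "VF (A s)" for s unfolding A_def using SF_sproj[OF f] K5a(1) by (rule VF_vscale)
    have VB: "VF (B p)" if "p \<in> P" for p
      unfolding B_def using SF_sproj g(1) pP[OF that] K3(1)[OF pP(1)[OF that]] by (intro VF_vscale) auto
    have "sbr X Y = (\<lambda>k S x. \<Sum>s<2. sbr (A s) Y k S x)"
      unfolding Xd by (rule sbr_sum_l) (auto simp: VA)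
    also have "\<dots> = (\<lambda>k S x. \<Sum>s<2. \<Sum>p\<in>P. sbr (A s) (B p) k S x)"
      unfolding Yd using sbr_sum_r[OF fP VB] by simp
    finally have e: "sbr X Y = (\<lambda>k S x. \<Sum>s<2. \<Sum>p\<in>P. sbr (A s) (B p) k S x)" .
    have "inH (sbr X Y)"
      unfolding e
    proof (intro inH_sum)
      fix s :: nat and p :: "nat \<times> nat" assume s: "s \<in> {..<2}" and p: "p \<in> P"
      show "inH (sbr (A s) (B p))" unfolding A_def B_def
        using term_sup[of s "snd p" "fst p" f "g (fst p)"] s pP[OF p] f g(1) by auto
    qed (auto simp: fP)
    then show "sbr X Y \<in> GammaH" by (simp add: GammaH_iff)
  qed
  then show "X \<in> ChH" unfolding ChH_def using iX GammaH_iff by auto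
next
  fix X assume "X \<in> ChH"
  then have XG: "X \<in> GammaH" and br: "\<forall>Y\<in>GammaH. sbr X Y \<in> GammaH" by (auto simp: ChH_def)
  have iX: "inH X" using XG GammaH_iff by simp
  define f where "f i = X (fr ! i)" for i
  have fSF: "i < 7 \<Longrightarrow> f i \<in> SF" for i using iX by (simp add: inH_def f_def)
  have sf: "i < 7 \<Longrightarrow> supp (f i)" for i using fSF SF_supp by blast
  have b1: "inH (sbr X (hg 1))" and b2: "inH (sbr X (hg 2))"
    using br inH_hg[of 1] inH_hg[of 2] GammaH_iff by auto
  have dl: "4 \<in> dls" "8 \<in> dls" "9 \<in> dls" by (simp_all add: dls_def)
  have E: "(\<Sum>i<7. smult (f i) (dlt (hbr (par ! i) 0 (hg i) (hg j)) m) S x) = 0"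
    if "j = 1 \<or> j = 2" "m \<in> dls" for j m S x
    using that b1 b2 eq_from_levi[OF iX, of j m S x] unfolding f_def by auto
  have sm: "smult F (sscale c G) = (\<lambda>S x. c * smult F G S x)" for F G c
    by (simp add: sscale_def smult_cmult_r)
  have c1: "smult (f i) (sconst c) S x = c * f i S x" if "i < 7" for i c S x
    using smult_const_r[OF sf[OF that], of c] by simp
  have e1: "f 1 S x = smult (f 0) (sscale (-1) (ecoord 5)) S x" for S x
    using E[of 2 4 S x] dl by (simp add: sum7p K7a K7a[simplified] sm c1)
  have e2: "f 2 S x = 0" for S x
    using E[of 1 4 S x] dl by (simp add: sum7p K7a K7a[simplified] sm c1)
  have e3: "f 3 S x = smult (f 0) (sscale (-1) (ocoord 4)) S x" for S x
    using E[of 2 9 S x] dl by (simp add: sum7p K7a K7a[simplified] sm c1) (simp add: eq_neg_iff_add_eq_0 add.commute)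
  have e4: "f 4 S x = smult (f 0) (sscale (-1) (ocoord 5)) S x" for S x
    using E[of 2 8 S x] dl by (simp add: sum7p K7a K7a[simplified] sm c1)
  have e5: "f 5 S x = 0" for S x
    using E[of 1 9 S x] dl by (simp add: sum7p K7a K7a[simplified] sm c1)
  have e6: "f 6 S x = 0" for S x
    using E[of 1 8 S x] dl by (simp add: sum7p K7a K7a[simplified] sm c1)
  have fC: "f i = smult (f 0) (Cfield (fr ! i))" if "i < 7" for i
  proof -
    have "i = 0 \<or> i = 1 \<or> i = 2 \<or> i = 3 \<or> i = 4 \<or> i = 5 \<or> i = 6" using that by arith
    then show ?thesis
      using e1 e2 e3 e4 e5 e6 smult_const_r[OF sf[of 0], of 1]
      by (elim disjE) (simp_all add: fun_eq_iff fr_nth K5b K5b[simplified])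
  qed
  have "X = vscale (f 0) Cfield"
  proof (rule ext)
    fix k
    have XR: "X k = (\<lambda>S x. \<Sum>i<7. smult (f i) (hg i k) S x)"
      using fun_cong[OF inH_rep[OF iX], of k] by (simp add: f_def)
    have CR: "Cfield k = (\<lambda>S x. \<Sum>i<7. smult (Cfield (fr ! i)) (hg i k) S x)"
      using fun_cong[OF inH_rep[OF inH_C], of k] by simp
    have t: "smult (f i) (hg i k) = smult (smult (f 0) (Cfield (fr ! i))) (hg i k)" if "i \<in> {..<7}" for i
      using that by (subst fC) auto
    have "X k = (\<lambda>S x. \<Sum>i<7. smult (smult (f 0) (Cfield (fr ! i))) (hg i k) S x)"
      unfolding XR using t by (intro ext sum.cong) auto
    also have "\<dots> = smult (f 0) (\<lambda>S x. \<Sum>i<7. smult (Cfield (fr ! i)) (hg i k) S x)"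
      by (simp only: smult_sum_r smult_assoc)
    also have "\<dots> = smult (f 0) (Cfield k)"
      using CR by simp
    finally show "X k = vscale (f 0) Cfield k" by (simp add: vscale_def)
  qed
  then show "X \<in> {vscale f Cfield | f. f \<in> SF}" using fSF[of 0] by auto
qed


end
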